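(* Let $\nu\in\mathcal{P}_2(\mathbb{R}^2)$, let $\mu$ be the $x$-marginal of an optimal plan $\gamma$ (a minimizer of $\int c\,d\gamma$ over $\Gamma(\nu)$), and let $\mu_i$ be the $x_i$-marginal of $\mu$, $i=1,2$. Then $\mu$ maximizes $\int x_1x_2\,d\pi$ over $\pi\in\Pi(\mu_1,\mu_2)$; equivalently, $$W_2(\mu_1,\mu_2)=\sqrt{\int|x_1-x_2|^2\,d\mu}.$$
   Context: $c(x,y)=(x_1-y_1)(x_2-y_2)$ for $x,y\in\mathbb{R}^2$. $\mathcal{P}_2(\mathbb{R}^d)$: Borel probability measures with finite second moment. $\Gamma(\nu)$: the set of $\gamma\in\mathcal{P}_2(\mathbb{R}^2\times\mathbb{R}^2)$ (points $(x,y)$) with $y$-marginal $\nu$ and $\gamma(y|x)=x$ (conditional expectation of $y$ given $x$ equals $x$, $\gamma$-a.s.). $\Pi(\mu_1,\mu_2)$ is the set of couplings of $\mu_1,\mu_2$, and $W_2(\mu_1,\mu_2)=\inf_{\pi\in\Pi(\mu_1,\mu_2)}\big(\int|s-t|^2d\pi(s,t)\big)^{1/2}$. *)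

theory Defs
  imports "HOL-Probability.Probability"
begin

type_synonym r2 = "real \<times> real"

definition P2 :: "('a::euclidean_space) measure set" where
  "P2 = {m. prob_space m \<and> sets m = sets borel \<and> integrable m (\<lambda>z. (norm z)^2)}"

definition cost :: "r2 \<Rightarrow> r2 \<Rightarrow> real" where
  "cost x y = (fst x - fst y) * (snd x - snd y)"

text \<open>gamma(y|x) = x gamma-a.s., written out via the defining property of
 conditional expectation: E[(y - x) 1_A(x)] = 0 for every Borel set A (componentwise).\<close>
definition cond_exp_identity :: "(r2 \<times> r2) measure \<Rightarrow> bool" where
  "cond_exp_identity g \<longleftrightarrow> (\<forall>A \<in> sets (borel :: r2 measure).
     (\<integral>p. indicator A (fst p) * (fst (snd p) - fst (fst p)) \<partial>g) = 0 \<and>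
     (\<integral>p. indicator A (fst p) * (snd (snd p) - snd (fst p)) \<partial>g) = 0)"

definition Gamma :: "r2 measure \<Rightarrow> (r2 \<times> r2) measure set" where
  "Gamma \<nu> = {g. g \<in> P2 \<and> distr g borel snd = \<nu> \<and> cond_exp_identity g}"

definition couplings :: "real measure \<Rightarrow> real measure \<Rightarrow> r2 measure set" where
  "couplings m1 m2 = {p. prob_space p \<and> sets p = sets borel \<and>
      distr p borel fst = m1 \<and> distr p borel snd = m2}"

definition W2 :: "real measure \<Rightarrow> real measure \<Rightarrow> real" where
  "W2 m1 m2 = sqrt (INF p \<in> couplings m1 m2. \<integral>st. (fst st - snd st)^2 \<partial>p)"

end

theory Submission
  imports Defs
begin


lemma maxabs_aux: "max 0 (d::real) * \<bar>a\<bar> \<le> \<bar>a\<bar> * \<bar>d\<bar>" "max 0 (- d) * \<bar>a\<bar> \<le> \<bar>a\<bar> * \<bar>d\<bar>"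
  by (auto simp: max_def mult.commute intro: mult_right_mono mult_nonpos_nonneg)

lemma lemmaM:
  fixes \<gamma> :: "'a measure" and D :: "'a \<Rightarrow> real" and X :: "'a \<Rightarrow> 'b"
  assumes fin: "finite_measure \<gamma>"
    and X[measurable]: "X \<in> measurable \<gamma> N"
    and D[measurable]: "D \<in> borel_measurable \<gamma>" and intD: "integrable \<gamma> D"
    and ce: "\<forall>A\<in>sets N. (\<integral>p. indicator A (X p) * D p \<partial>\<gamma>) = 0"
    and f[measurable]: "f \<in> borel_measurable N"
    and intf: "integrable \<gamma> (\<lambda>p. f (X p) * D p)"
  shows "(\<integral>p. f (X p) * D p \<partial>\<gamma>) = 0"
proof -
  define Dp where "Dp p = max 0 (D p)" for p
  define Dm where "Dm p = max 0 (- D p)" for p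
  have [measurable]: "Dp \<in> borel_measurable \<gamma>" "Dm \<in> borel_measurable \<gamma>"
    unfolding Dp_def Dm_def by measurable
  have intDp: "integrable \<gamma> Dp" "integrable \<gamma> Dm"
    unfolding Dp_def Dm_def using intD by auto
  define rp where "rp = distr (density \<gamma> Dp) N X"
  define rm where "rm = distr (density \<gamma> Dm) N X"
  have eq: "rp = rm"
  proof (rule measure_eqI)
    show "sets rp = sets rm" unfolding rp_def rm_def by simp
    fix A assume "A \<in> sets rp"
    then have A[measurable]: "A \<in> sets N" unfolding rp_def by simp
    have i1: "integrable \<gamma> (\<lambda>p. indicator A (X p) * Dp p)"
      by (rule Bochner_Integration.integrable_bound[OF intDp(1)]) (auto simp: Dp_def indicator_def)
    have i2: "integrable \<gamma> (\<lambda>p. indicator A (X p) * Dm p)"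
      by (rule Bochner_Integration.integrable_bound[OF intDp(2)]) (auto simp: Dm_def indicator_def)
    have "(\<integral>p. indicator A (X p) * D p \<partial>\<gamma>) = (\<integral>p. indicator A (X p) * Dp p - indicator A (X p) * Dm p \<partial>\<gamma>)"
      by (rule Bochner_Integration.integral_cong) (auto simp: Dp_def Dm_def indicator_def)
    also have "\<dots> = (\<integral>p. indicator A (X p) * Dp p \<partial>\<gamma>) - (\<integral>p. indicator A (X p) * Dm p \<partial>\<gamma>)"
      using i1 i2 by simp
    finally have e: "(\<integral>p. indicator A (X p) * Dp p \<partial>\<gamma>) = (\<integral>p. indicator A (X p) * Dm p \<partial>\<gamma>)"
      using ce A by simp
    have "emeasure rp A = (\<integral>\<^sup>+p. ennreal (Dp p) * indicator (X -` A \<inter> space \<gamma>) p \<partial>\<gamma>)"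
      unfolding rp_def by (simp add: emeasure_distr emeasure_density)
    also have "\<dots> = (\<integral>\<^sup>+p. ennreal (indicator A (X p) * Dp p) \<partial>\<gamma>)"
      by (intro nn_integral_cong) (auto simp: indicator_def)
    also have "\<dots> = ennreal (\<integral>p. indicator A (X p) * Dp p \<partial>\<gamma>)"
      by (rule nn_integral_eq_integral[OF i1]) (auto simp: Dp_def)
    also have "\<dots> = ennreal (\<integral>p. indicator A (X p) * Dm p \<partial>\<gamma>)" using e by simp
    also have "\<dots> = (\<integral>\<^sup>+p. ennreal (indicator A (X p) * Dm p) \<partial>\<gamma>)"
      by (rule nn_integral_eq_integral[OF i2, symmetric]) (auto simp: Dm_def)
    also have "\<dots> = (\<integral>\<^sup>+p. ennreal (Dm p) * indicator (X -` A \<inter> space \<gamma>) p \<partial>\<gamma>)"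
      by (intro nn_integral_cong) (auto simp: indicator_def)
    also have "\<dots> = emeasure rm A"
      unfolding rm_def by (simp add: emeasure_distr emeasure_density)
    finally show "emeasure rp A = emeasure rm A" .
  qed
  have "(\<integral>x. f x \<partial>rp) = (\<integral>p. Dp p * f (X p) \<partial>\<gamma>)"
    unfolding rp_def by (subst integral_distr, simp_all, subst integral_density) (auto simp: Dp_def)
  moreover have "(\<integral>x. f x \<partial>rm) = (\<integral>p. Dm p * f (X p) \<partial>\<gamma>)"
    unfolding rm_def by (subst integral_distr, simp_all, subst integral_density) (auto simp: Dm_def)
  ultimately have e2: "(\<integral>p. Dp p * f (X p) \<partial>\<gamma>) = (\<integral>p. Dm p * f (X p) \<partial>\<gamma>)" using eq by simp
  have j1: "integrable \<gamma> (\<lambda>p. Dp p * f (X p))"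
    by (rule Bochner_Integration.integrable_bound[OF intf]) (auto simp: Dp_def abs_mult maxabs_aux)
  have j2: "integrable \<gamma> (\<lambda>p. Dm p * f (X p))"
    by (rule Bochner_Integration.integrable_bound[OF intf]) (auto simp: Dm_def abs_mult maxabs_aux)
  have "(\<integral>p. f (X p) * D p \<partial>\<gamma>) = (\<integral>p. Dp p * f (X p) - Dm p * f (X p) \<partial>\<gamma>)"
    by (rule Bochner_Integration.integral_cong) (auto simp: Dp_def Dm_def max_def algebra_simps)
  also have "\<dots> = 0" using j1 j2 e2 by simp
  finally show ?thesis .
qed



lemma comp_bounds:
  fixes p :: "r2 \<times> r2"
  shows "norm (fst p) \<le> norm p" "norm (snd p) \<le> norm p"
    "\<bar>fst (fst p)\<bar> \<le> norm p" "\<bar>snd (fst p)\<bar> \<le> norm p"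
    "\<bar>fst (snd p)\<bar> \<le> norm p" "\<bar>snd (snd p)\<bar> \<le> norm p"
proof -
  obtain a b where p: "p = (a, b)" by (cases p)
  show 1: "norm (fst p) \<le> norm p" "norm (snd p) \<le> norm p" using p norm_fst_le norm_snd_le by auto
  have "\<bar>fst z\<bar> \<le> norm z" "\<bar>snd z\<bar> \<le> norm z" for z :: r2
    using norm_fst_le[of "fst z" "snd z"] norm_snd_le[of "snd z" "fst z"] by auto
  then show "\<bar>fst (fst p)\<bar> \<le> norm p" "\<bar>snd (fst p)\<bar> \<le> norm p"
    "\<bar>fst (snd p)\<bar> \<le> norm p" "\<bar>snd (snd p)\<bar> \<le> norm p"
    using 1 by (meson order_trans)+
qed

lemma sq_bound_aux: "\<bar>(a::real)\<bar> \<le> n + c \<Longrightarrow> \<bar>b\<bar> \<le> n + c \<Longrightarrow> 0 \<le> n \<Longrightarrow> 0 \<le> c \<Longrightarrow> \<bar>a * b\<bar> \<le> 2 * n^2 + 2 * c^2"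
proof -
  assume h: "\<bar>a\<bar> \<le> n + c" "\<bar>b\<bar> \<le> n + c" "0 \<le> n" "0 \<le> c"
  have "\<bar>a * b\<bar> \<le> (n + c) * (n + c)" unfolding abs_mult using h by (intro mult_mono) auto
  also have "\<dots> = 2 * n^2 + 2 * c^2 - (n - c)^2" by (simp add: power2_eq_square algebra_simps)
  also have "\<dots> \<le> 2 * n^2 + 2 * c^2" by simp
  finally show ?thesis .
qed

lemma two_le_sq: "2 * (t::real) \<le> 1 + t^2"
proof -
  have "0 \<le> (t - 1)^2" by simp
  then show ?thesis by (simp add: power2_eq_square algebra_simps)
qed

lemma int_by_sq:
  fixes M :: "'a::real_normed_vector measure"
  assumes "finite_measure M" "integrable M (\<lambda>z. norm z ^ 2)" "h \<in> borel_measurable M"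
    "\<And>z. z \<in> space M \<Longrightarrow> \<bar>h z\<bar> \<le> C * norm z ^ 2 + C"
  shows "integrable M h"
proof (rule Bochner_Integration.integrable_bound[where f = "\<lambda>z. C * norm z ^ 2 + C"])
  show "integrable M (\<lambda>z. C * norm z ^ 2 + C)"
    using assms(1,2) by (intro Bochner_Integration.integrable_add integrable_mult_right finite_measure.integrable_const) auto
  show "h \<in> borel_measurable M" by fact
  show "AE x in M. norm (h x) \<le> norm (C * (norm x)\<^sup>2 + C)"
    using assms(4) by (intro AE_I2) (auto, meson abs_ge_self order_trans)
qed

lemma meas_fst_snd[measurable]:
  "fst \<in> measurable (borel :: ('a::second_countable_topology \<times> 'b::second_countable_topology) measure) borel"
  "snd \<in> measurable (borel :: ('a::second_countable_topology \<times> 'b::second_countable_topology) measure) borel"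
  by (metis borel_prod measurable_fst, metis borel_prod measurable_snd)

lemma Gamma_basic:
  assumes "g \<in> Gamma \<nu>"
  shows "prob_space g" "sets g = sets borel" "integrable g (\<lambda>z. norm z ^ 2)"
    "cond_exp_identity g" "distr g borel snd = \<nu>"
  using assms unfolding Gamma_def P2_def by auto



lemma ce_transfer:
  fixes \<gamma> :: "(r2 \<times> r2) measure" and P :: "r2 \<Rightarrow> real"
  assumes ps: "prob_space \<gamma>" and sg: "sets \<gamma> = sets borel"
    and sq: "integrable \<gamma> (\<lambda>z. norm z ^ 2)"
    and P[measurable]: "P \<in> borel_measurable borel" and Pb: "\<And>z. \<bar>P z\<bar> \<le> norm z"
    and ce: "\<forall>A\<in>sets (borel :: r2 measure). (\<integral>p. indicator A (fst p) * (P (snd p) - P (fst p)) \<partial>\<gamma>) = 0"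
    and E[measurable]: "E \<in> sets borel"
    and mE: "P m * (\<integral>p. indicator E (fst p) \<partial>\<gamma>) = (\<integral>p. indicator E (fst p) * P (fst p) \<partial>\<gamma>)"
    and C[measurable]: "C \<in> sets (borel :: r2 measure)"
  shows "(\<integral>p. indicator C (if fst p \<in> E then m else fst p) * (P (snd p) - P (if fst p \<in> E then m else fst p)) \<partial>\<gamma>) = 0"
proof -
  have fm: "finite_measure \<gamma>" using ps by (simp add: prob_space_def)
  have mc: "measurable \<gamma> N = measurable borel N" for N :: "'z measure"
    using sg by (rule measurable_cong_sets) auto
  have Pfst: "\<bar>P (fst p)\<bar> \<le> norm p" "\<bar>P (snd p)\<bar> \<le> norm p" for p :: "r2\<times>r2"
    using Pb comp_bounds(1,2) order_trans by blast+
  have intD: "integrable \<gamma> (\<lambda>p. P (snd p) - P (fst p))"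
  proof (rule int_by_sq[OF fm sq, where C = 2])
    fix z :: "r2 \<times> r2"
    have "\<bar>P (snd z) - P (fst z)\<bar> \<le> 2 * norm z" using Pfst[of z] by linarith
    also have "\<dots> \<le> 2 * norm z ^ 2 + 2" using two_le_sq[of "norm z"] zero_le_power2[of "norm z"] by linarith
    finally show "\<bar>P (snd z) - P (fst z)\<bar> \<le> 2 * norm z ^ 2 + 2" .
  qed (unfold mc, measurable)
  have intA: "integrable \<gamma> (\<lambda>p. indicator A (fst p) * (P (snd p) - P (fst p)))" if [measurable]: "A \<in> sets borel" for A
    by (rule Bochner_Integration.integrable_bound[OF intD]) (unfold mc, measurable, auto simp: indicator_def)
  have int1: "integrable \<gamma> (\<lambda>p. indicator E (fst p) :: real)"
    using fm by (intro finite_measure.integrable_const_bound[where B=1]) (auto simp: mc)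
  have int2: "integrable \<gamma> (\<lambda>p. indicator E (fst p) * P (fst p))"
  proof (rule int_by_sq[OF fm sq, where C = 1])
    fix z :: "r2 \<times> r2"
    have "\<bar>indicator E (fst z) * P (fst z)\<bar> \<le> norm z" using Pfst[of z] by (auto simp: indicator_def)
    also have "\<dots> \<le> 1 * norm z ^ 2 + 1" using two_le_sq[of "norm z"] zero_le_power2[of "norm z"] by linarith
    finally show "\<bar>indicator E (fst z) * P (fst z)\<bar> \<le> 1 * norm z ^ 2 + 1" .
  qed (unfold mc, measurable)
  have "(\<integral>p. indicator C (if fst p \<in> E then m else fst p) * (P (snd p) - P (if fst p \<in> E then m else fst p)) \<partial>\<gamma>)
     = (\<integral>p. indicator (C - E) (fst p) * (P (snd p) - P (fst p)) + indicator C m * (indicator E (fst p) * (P (snd p) - P (fst p)) + (indicator E (fst p) * P (fst p) - P m * indicator E (fst p))) \<partial>\<gamma>)"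
    by (rule Bochner_Integration.integral_cong) (auto simp: indicator_def algebra_simps)
  also have "\<dots> = (\<integral>p. indicator (C - E) (fst p) * (P (snd p) - P (fst p)) \<partial>\<gamma>) + indicator C m * ((\<integral>p. indicator E (fst p) * (P (snd p) - P (fst p)) \<partial>\<gamma>) + ((\<integral>p. indicator E (fst p) * P (fst p) \<partial>\<gamma>) - P m * (\<integral>p. indicator E (fst p) \<partial>\<gamma>)))"
    using intA[of "C - E"] intA[of E] int1 int2 by simp
  also have "\<dots> = 0" using ce C E mE by simp
  finally show ?thesis .
qed



lemma int_prod:
  fixes \<gamma> :: "('a::real_normed_vector) measure"
  assumes fm: "finite_measure \<gamma>" and sq: "integrable \<gamma> (\<lambda>z. norm z ^ 2)"
    and [measurable]: "u \<in> borel_measurable \<gamma>" "v \<in> borel_measurable \<gamma>"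
    and ub: "\<And>p. \<bar>u p\<bar> \<le> norm p + c" and vb: "\<And>p. \<bar>v p\<bar> \<le> norm p + c" and c: "0 \<le> c"
  shows "integrable \<gamma> (\<lambda>p. u p * v p)"
proof (rule int_by_sq[OF fm sq, where C = "2 + 2 * c^2"])
  fix z
  have "\<bar>u z * v z\<bar> \<le> 2 * norm z ^ 2 + 2 * c^2" by (rule sq_bound_aux[OF ub vb]) (use c in auto)
  also have "\<dots> \<le> (2 + 2 * c^2) * norm z ^ 2 + (2 + 2 * c^2)"
    by (simp add: algebra_simps add_increasing)
  finally show "\<bar>u z * v z\<bar> \<le> (2 + 2 * c^2) * norm z ^ 2 + (2 + 2 * c^2)" .
qed measurable

lemma int_lin:
  fixes \<gamma> :: "('a::real_normed_vector) measure"
  assumes fm: "finite_measure \<gamma>" and sq: "integrable \<gamma> (\<lambda>z. norm z ^ 2)"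
    and [measurable]: "u \<in> borel_measurable \<gamma>"
    and ub: "\<And>p. \<bar>u p\<bar> \<le> norm p + c" and c: "0 \<le> c"
  shows "integrable \<gamma> u"
proof -
  have "integrable \<gamma> (\<lambda>p. u p * 1)"
  proof (rule int_prod[OF fm sq, of u "\<lambda>_. 1" "c + 1"])
    show "\<bar>u p\<bar> \<le> norm p + (c + 1)" for p using ub[of p] by linarith
    show "\<bar>1\<bar> \<le> norm p + (c + 1)" for p using c norm_ge_zero[of p] by linarith
  qed (use c in auto)
  then show ?thesis by simp
qed



lemma int_prodk:
  fixes \<gamma> :: "('a::real_normed_vector) measure"
  assumes fm: "finite_measure \<gamma>" and sq: "integrable \<gamma> (\<lambda>z. norm z ^ 2)"
    and [measurable]: "u \<in> borel_measurable \<gamma>" "v \<in> borel_measurable \<gamma>"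
    and ub: "\<And>p. \<bar>u p\<bar> \<le> k * norm p + c" and vb: "\<And>p. \<bar>v p\<bar> \<le> k * norm p + c" and c: "0 \<le> c" and k: "0 \<le> k"
  shows "integrable \<gamma> (\<lambda>p. u p * v p)"
proof (rule int_by_sq[OF fm sq, where C = "2 * k^2 + 2 * c^2"])
  fix z
  have "\<bar>u z * v z\<bar> \<le> 2 * (k * norm z) ^ 2 + 2 * c^2" by (rule sq_bound_aux[OF ub vb]) (use c k in auto)
  also have "\<dots> \<le> (2 * k^2 + 2 * c^2) * norm z ^ 2 + (2 * k^2 + 2 * c^2)"
    by (simp add: algebra_simps add_increasing power_mult_distrib)
  finally show "\<bar>u z * v z\<bar> \<le> (2 * k^2 + 2 * c^2) * norm z ^ 2 + (2 * k^2 + 2 * c^2)" .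
qed measurable

lemma coarsen:
  fixes \<gamma> :: "(r2 \<times> r2) measure" and E :: "r2 set"
  assumes g: "\<gamma> \<in> Gamma \<nu>"
    and opt: "\<forall>g \<in> Gamma \<nu>. (\<integral>p. cost (fst p) (snd p) \<partial>\<gamma>) \<le> (\<integral>p. cost (fst p) (snd p) \<partial>g)"
    and E[measurable]: "E \<in> sets borel"
    and pos: "(\<integral>p. indicator E (fst p) \<partial>\<gamma>) > (0::real)"
  shows "(\<integral>p. indicator E (fst p) * fst (fst p) \<partial>\<gamma>) * (\<integral>p. indicator E (fst p) * snd (fst p) \<partial>\<gamma>)
     \<le> (\<integral>p. indicator E (fst p) \<partial>\<gamma>) * (\<integral>p. indicator E (fst p) * (fst (fst p) * snd (fst p)) \<partial>\<gamma>)"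
proof (rule ccontr)
  note gb = Gamma_basic[OF g]
  have ps: "prob_space \<gamma>" and sg: "sets \<gamma> = sets borel" and sq: "integrable \<gamma> (\<lambda>z. norm z ^ 2)"
    and ce: "cond_exp_identity \<gamma>" and dn: "distr \<gamma> borel snd = \<nu>" using gb by auto
  have fm: "finite_measure \<gamma>" using ps by (simp add: prob_space_def)
  have mc: "measurable \<gamma> N = measurable borel N" for N :: "'z measure"
    using sg by (rule measurable_cong_sets) auto
  define pE :: real where "pE = (\<integral>p. indicator E (fst p) \<partial>\<gamma>)"
  define S1 :: real where "S1 = (\<integral>p. indicator E (fst p) * fst (fst p) \<partial>\<gamma>)"
  define S2 :: real where "S2 = (\<integral>p. indicator E (fst p) * snd (fst p) \<partial>\<gamma>)"
  define S12 :: real where "S12 = (\<integral>p. indicator E (fst p) * (fst (fst p) * snd (fst p)) \<partial>\<gamma>)"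
  assume "\<not> S1 * S2 \<le> pE * S12"
  then have viol: "pE * S12 < S1 * S2" unfolding S1_def S2_def pE_def S12_def by simp
  have pE: "pE > 0" using pos unfolding pE_def .
  define m where "m = (S1 / pE, S2 / pE)"
  define gE where "gE x = (if x \<in> E then m else x)" for x
  define G where "G p = (gE (fst p), snd p)" for p :: "r2 \<times> r2"
  have gEm[measurable]: "gE \<in> borel_measurable borel" unfolding gE_def by (rule measurable_If_set) auto
  have [measurable]: "G \<in> measurable borel borel"
  proof -
    have "(\<lambda>p::r2\<times>r2. gE (fst p)) \<in> measurable borel borel" using measurable_compose[OF meas_fst_snd(1) gEm] by simp
    then have "G \<in> measurable borel (borel \<Otimes>\<^sub>M borel)" unfolding G_def by (intro measurable_Pair) auto
    then show ?thesis by (simp add: borel_prod)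
  qed
  have Gm: "G \<in> measurable \<gamma> borel" by (simp add: mc)
  define \<gamma>' where "\<gamma>' = distr \<gamma> borel G"
  have cb: "\<bar>fst x\<bar> \<le> norm x" "\<bar>snd x\<bar> \<le> norm x" for x :: r2
    using norm_fst_le[of "fst x" "snd x"] norm_snd_le[of "snd x" "fst x"] by auto
  have ps': "prob_space \<gamma>'" unfolding \<gamma>'_def by (rule prob_space.prob_space_distr[OF ps Gm])
  have sg': "sets \<gamma>' = sets borel" unfolding \<gamma>'_def by simp
  have sq': "integrable \<gamma>' (\<lambda>z. norm z ^ 2)"
    unfolding \<gamma>'_def
  proof (subst integrable_distr_eq[OF Gm], measurable)
    show "integrable \<gamma> (\<lambda>x. (norm (G x))\<^sup>2)"
    proof (rule int_by_sq[OF fm sq, where C = "1 + norm m ^ 2"])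
      fix z :: "r2 \<times> r2"
      obtain a b where z: "z = (a, b)" by (cases z)
      have "\<bar>norm (G z) ^ 2\<bar> = norm (gE a) ^ 2 + norm b ^ 2" by (simp add: z G_def norm_Pair)
      also have "\<dots> \<le> norm a ^ 2 + norm m ^ 2 + norm b ^ 2" by (auto simp: gE_def)
      also have "\<dots> = norm z ^ 2 + norm m ^ 2" by (simp add: z norm_Pair)
      also have "\<dots> \<le> (1 + norm m ^ 2) * norm z ^ 2 + (1 + norm m ^ 2)"
        by (simp add: algebra_simps add_increasing)
      finally show "\<bar>(norm (G z))\<^sup>2\<bar> \<le> (1 + (norm m)\<^sup>2) * (norm z)\<^sup>2 + (1 + (norm m)\<^sup>2)" .
    qed (simp add: mc)
  qed
  have dn': "distr \<gamma>' borel snd = \<nu>"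
  proof -
    have "distr \<gamma>' borel snd = distr \<gamma> borel (snd \<circ> G)" unfolding \<gamma>'_def
      by (subst distr_distr) (auto simp: Gm)
    also have "snd \<circ> G = snd" by (auto simp: G_def)
    finally show ?thesis using dn by simp
  qed
  have ce': "cond_exp_identity \<gamma>'"
    unfolding cond_exp_identity_def
  proof
    fix C :: "r2 set" assume C[measurable]: "C \<in> sets borel"
    have ce1: "\<forall>A\<in>sets (borel :: r2 measure). (\<integral>p. indicator A (fst p) * (fst (snd p) - fst (fst p)) \<partial>\<gamma>) = 0"
     and ce2: "\<forall>A\<in>sets (borel :: r2 measure). (\<integral>p. indicator A (fst p) * (snd (snd p) - snd (fst p)) \<partial>\<gamma>) = 0"
      using ce unfolding cond_exp_identity_def by auto
    have "(\<integral>p. indicator C (fst p) * (fst (snd p) - fst (fst p)) \<partial>\<gamma>') =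
        (\<integral>p. indicator C (if fst p \<in> E then m else fst p) * (fst (snd p) - fst (if fst p \<in> E then m else fst p)) \<partial>\<gamma>)"
      unfolding \<gamma>'_def by (subst integral_distr[OF Gm]) (measurable, simp add: G_def gE_def)
    also have "\<dots> = 0"
    proof (rule ce_transfer[OF ps sg sq _ _ ce1 E _ C])
      show "fst m * (\<integral>p. indicator E (fst p) \<partial>\<gamma>) = (\<integral>p. indicator E (fst p) * fst (fst p) \<partial>\<gamma>)"
        using pE unfolding m_def pE_def[symmetric] S1_def[symmetric] by simp
    qed (auto simp: cb)
    finally have 1: "(\<integral>p. indicator C (fst p) * (fst (snd p) - fst (fst p)) \<partial>\<gamma>') = 0" .
    have "(\<integral>p. indicator C (fst p) * (snd (snd p) - snd (fst p)) \<partial>\<gamma>') =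
        (\<integral>p. indicator C (if fst p \<in> E then m else fst p) * (snd (snd p) - snd (if fst p \<in> E then m else fst p)) \<partial>\<gamma>)"
      unfolding \<gamma>'_def by (subst integral_distr[OF Gm]) (measurable, simp add: G_def gE_def)
    also have "\<dots> = 0"
    proof (rule ce_transfer[OF ps sg sq _ _ ce2 E _ C])
      show "snd m * (\<integral>p. indicator E (fst p) \<partial>\<gamma>) = (\<integral>p. indicator E (fst p) * snd (fst p) \<partial>\<gamma>)"
        using pE unfolding m_def pE_def[symmetric] S2_def[symmetric] by simp
    qed (auto simp: cb)
    finally show "(\<integral>p. indicator C (fst p) * (fst (snd p) - fst (fst p)) \<partial>\<gamma>') = 0 \<and>
         (\<integral>p. indicator C (fst p) * (snd (snd p) - snd (fst p)) \<partial>\<gamma>') = 0" using 1 by simp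
  qed
  have g': "\<gamma>' \<in> Gamma \<nu>" unfolding Gamma_def P2_def using ps' sg' sq' dn' ce' by auto
  have ce2: "\<forall>A\<in>sets (borel :: r2 measure). (\<integral>p. indicator A (fst p) * (snd (snd p) - snd (fst p)) \<partial>\<gamma>) = 0"
   and ce1: "\<forall>A\<in>sets (borel :: r2 measure). (\<integral>p. indicator A (fst p) * (fst (snd p) - fst (fst p)) \<partial>\<gamma>) = 0"
    using ce unfolding cond_exp_identity_def by auto
  have cp: "\<bar>fst (fst p)\<bar> \<le> norm p" "\<bar>snd (fst p)\<bar> \<le> norm p" "\<bar>fst (snd p)\<bar> \<le> norm p" "\<bar>snd (snd p)\<bar> \<le> norm p"
    "norm (fst p) \<le> norm p" for p :: "r2 \<times> r2" using comp_bounds by auto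
  have nm: "\<bar>fst m\<bar> \<le> norm m" "\<bar>snd m\<bar> \<le> norm m" using cb by auto
  have [measurable]: "(\<lambda>p::r2\<times>r2. fst (fst p)) \<in> borel_measurable \<gamma>" "(\<lambda>p::r2\<times>r2. snd (fst p)) \<in> borel_measurable \<gamma>"
    "(\<lambda>p::r2\<times>r2. fst (snd p)) \<in> borel_measurable \<gamma>" "(\<lambda>p::r2\<times>r2. snd (snd p)) \<in> borel_measurable \<gamma>"
    "(\<lambda>p::r2\<times>r2. indicator E (fst p) :: real) \<in> borel_measurable \<gamma>"
    by (simp_all add: mc)
  define f1 where "f1 p = indicator E (fst p) * (fst (fst p) - fst m)" for p :: "r2 \<times> r2"
  define f2 where "f2 p = indicator E (fst p) * (snd (fst p) - snd m)" for p :: "r2 \<times> r2"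
  have [measurable]: "f1 \<in> borel_measurable \<gamma>" "f2 \<in> borel_measurable \<gamma>" unfolding f1_def f2_def by measurable
  have f1b: "\<bar>f1 p\<bar> \<le> 2 * norm p + norm m" for p
    using cp(1)[of p] nm norm_ge_zero[of p] by (auto simp: f1_def indicator_def)
  have f2b: "\<bar>f2 p\<bar> \<le> 2 * norm p + norm m" for p
    using cp(2)[of p] nm norm_ge_zero[of p] by (auto simp: f2_def indicator_def)
  have d1b: "\<bar>fst (snd p) - fst (fst p)\<bar> \<le> 2 * norm p + norm m" for p :: "r2 \<times> r2"
    using cp[of p] norm_ge_zero[of m] by linarith
  have d2b: "\<bar>snd (snd p) - snd (fst p)\<bar> \<le> 2 * norm p + norm m" for p :: "r2 \<times> r2"
    using cp[of p] norm_ge_zero[of m] by linarith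
  have x2b: "\<bar>snd (fst p) - snd m\<bar> \<le> 2 * norm p + norm m" for p :: "r2 \<times> r2"
    using cp[of p] nm norm_ge_zero[of p] by linarith
  have i1: "integrable \<gamma> (\<lambda>p. f1 p * (snd (fst p) - snd m))"
    by (rule int_prodk[OF fm sq _ _ f1b x2b]) auto
  have i2: "integrable \<gamma> (\<lambda>p. f1 p * (snd (snd p) - snd (fst p)))"
    by (rule int_prodk[OF fm sq _ _ f1b d2b]) auto
  have i3: "integrable \<gamma> (\<lambda>p. f2 p * (fst (snd p) - fst (fst p)))"
    by (rule int_prodk[OF fm sq _ _ f2b d1b]) auto
  have e1b: "\<bar>fst (gE (fst p)) - fst (snd p)\<bar> \<le> 2 * norm p + norm m" for p :: "r2 \<times> r2"
    using cp[of p] nm norm_ge_zero[of p] by (auto simp: gE_def)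
  have e2b: "\<bar>snd (gE (fst p)) - snd (snd p)\<bar> \<le> 2 * norm p + norm m" for p :: "r2 \<times> r2"
    using cp[of p] nm norm_ge_zero[of p] by (auto simp: gE_def)
  have e1b': "\<bar>fst (fst p) - fst (snd p)\<bar> \<le> 2 * norm p + norm m" for p :: "r2 \<times> r2"
    using cp[of p] norm_ge_zero[of m] by linarith
  have e2b': "\<bar>snd (fst p) - snd (snd p)\<bar> \<le> 2 * norm p + norm m" for p :: "r2 \<times> r2"
    using cp[of p] norm_ge_zero[of m] by linarith
  have gEm'[measurable]: "(\<lambda>p::r2\<times>r2. gE (fst p)) \<in> measurable \<gamma> borel" by (simp add: mc)
  have ic1: "integrable \<gamma> (\<lambda>p. cost (fst p) (snd p))"
    unfolding cost_def by (rule int_prodk[OF fm sq _ _ e1b' e2b']) auto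
  have ic2: "integrable \<gamma> (\<lambda>p. cost (gE (fst p)) (snd p))"
    unfolding cost_def by (rule int_prodk[OF fm sq _ _ e1b e2b]) auto
  have costm[measurable]: "(\<lambda>q::r2\<times>r2. cost (fst q) (snd q)) \<in> borel_measurable borel"
    unfolding cost_def by measurable
  have cg': "(\<integral>q. cost (fst q) (snd q) \<partial>\<gamma>') = (\<integral>p. cost (gE (fst p)) (snd p) \<partial>\<gamma>)"
    unfolding \<gamma>'_def by (subst integral_distr[OF Gm costm]) (simp add: G_def)
  have ix1: "integrable \<gamma> (\<lambda>p. fst (fst p))" "integrable \<gamma> (\<lambda>p. snd (fst p))"
    "integrable \<gamma> (\<lambda>p. fst (snd p))" "integrable \<gamma> (\<lambda>p. snd (snd p))"
    by (rule int_lin[OF fm sq, where c=0]; use cp in auto)+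
  have ie: "integrable \<gamma> (\<lambda>p. indicator E (fst p) :: real)"
    using fm by (intro finite_measure.integrable_const_bound[where B=1]) auto
  have iex1: "integrable \<gamma> (\<lambda>p. indicator E (fst p) * fst (fst p))"
    by (rule int_lin[OF fm sq, where c=0], measurable) (use cp in \<open>auto simp: indicator_def\<close>)
  have iex2: "integrable \<gamma> (\<lambda>p. indicator E (fst p) * snd (fst p))"
    by (rule int_lin[OF fm sq, where c=0], measurable) (use cp in \<open>auto simp: indicator_def\<close>)
  have iex12: "integrable \<gamma> (\<lambda>p. indicator E (fst p) * fst (fst p) * snd (fst p))"
    by (rule int_prod[OF fm sq, where c=0], measurable, measurable) (use cp in \<open>auto simp: indicator_def\<close>)
  have z2: "(\<integral>p. f1 p * (snd (snd p) - snd (fst p)) \<partial>\<gamma>) = 0"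
    unfolding f1_def
    by (rule lemmaM[OF fm, of fst borel "\<lambda>p. snd (snd p) - snd (fst p)" "\<lambda>x. indicator E x * (fst x - fst m)"])
      (use ce2 i2 ix1 in \<open>auto simp: mc f1_def\<close>)
  have z1: "(\<integral>p. f2 p * (fst (snd p) - fst (fst p)) \<partial>\<gamma>) = 0"
    unfolding f2_def
    by (rule lemmaM[OF fm, of fst borel "\<lambda>p. fst (snd p) - fst (fst p)" "\<lambda>x. indicator E x * (snd x - snd m)"])
      (use ce1 i3 ix1 in \<open>auto simp: mc f2_def\<close>)
  have "(\<integral>p. f1 p * (snd (fst p) - snd m) \<partial>\<gamma>) =
      (\<integral>p. indicator E (fst p) * fst (fst p) * snd (fst p) - snd m * (indicator E (fst p) * fst (fst p))
         - fst m * (indicator E (fst p) * snd (fst p)) + fst m * snd m * indicator E (fst p) \<partial>\<gamma>)"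
    by (rule Bochner_Integration.integral_cong) (auto simp: f1_def algebra_simps)
  also have "\<dots> = S12 - snd m * S1 - fst m * S2 + fst m * snd m * pE"
    using ie iex1 iex2 iex12 unfolding S12_def S1_def S2_def pE_def by (simp add: mult.assoc)
  also have "\<dots> = S12 - S1 * S2 / pE" using pE unfolding m_def by (simp add: field_simps)
  finally have cov: "(\<integral>p. f1 p * (snd (fst p) - snd m) \<partial>\<gamma>) = S12 - S1 * S2 / pE" .
  have "(\<integral>p. cost (fst p) (snd p) \<partial>\<gamma>) - (\<integral>p. cost (gE (fst p)) (snd p) \<partial>\<gamma>)
      = (\<integral>p. cost (fst p) (snd p) - cost (gE (fst p)) (snd p) \<partial>\<gamma>)" using ic1 ic2 by simp
  also have "\<dots> = (\<integral>p. - (f1 p * (snd (fst p) - snd m)) - f1 p * (snd (snd p) - snd (fst p)) - f2 p * (fst (snd p) - fst (fst p)) \<partial>\<gamma>)"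
    by (rule Bochner_Integration.integral_cong) (auto simp: f1_def f2_def gE_def cost_def indicator_def algebra_simps)
  also have "\<dots> = - (S12 - S1 * S2 / pE)" using i1 i2 i3 z1 z2 cov by simp
  finally have dif: "(\<integral>p. cost (fst p) (snd p) \<partial>\<gamma>) - (\<integral>p. cost (gE (fst p)) (snd p) \<partial>\<gamma>) = - (S12 - S1 * S2 / pE)" .
  have "S12 - S1 * S2 / pE < 0" using viol pE by (simp add: field_simps)
  then have "(\<integral>q. cost (fst q) (snd q) \<partial>\<gamma>') < (\<integral>p. cost (fst p) (snd p) \<partial>\<gamma>)" using dif cg' by linarith
  moreover have "(\<integral>p. cost (fst p) (snd p) \<partial>\<gamma>) \<le> (\<integral>q. cost (fst q) (snd q) \<partial>\<gamma>')" using opt g' by blast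
  ultimately show False by linarith
qed



lemma cov_mu:
  fixes \<gamma> :: "(r2 \<times> r2) measure" and E :: "r2 set"
  assumes g: "\<gamma> \<in> Gamma \<nu>"
    and opt: "\<forall>g \<in> Gamma \<nu>. (\<integral>p. cost (fst p) (snd p) \<partial>\<gamma>) \<le> (\<integral>p. cost (fst p) (snd p) \<partial>g)"
    and E[measurable]: "E \<in> sets borel"
    and pos: "(\<integral>x. indicator E x \<partial>distr \<gamma> borel fst) > (0::real)"
  shows "(\<integral>x. indicator E x * fst x \<partial>distr \<gamma> borel fst) * (\<integral>x. indicator E x * snd x \<partial>distr \<gamma> borel fst)
     \<le> (\<integral>x. indicator E x \<partial>distr \<gamma> borel fst) * (\<integral>x. indicator E x * (fst x * snd x) \<partial>distr \<gamma> borel fst)"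
proof -
  have sg: "sets \<gamma> = sets borel" using Gamma_basic[OF g] by auto
  have fm: "fst \<in> measurable \<gamma> borel" using sg by (simp add: measurable_cong_sets[OF sg refl])
  have tr: "(\<integral>x. f x \<partial>distr \<gamma> borel fst) = (\<integral>p. f (fst p) \<partial>\<gamma>)" if "f \<in> borel_measurable borel" for f :: "r2 \<Rightarrow> real"
    by (rule integral_distr[OF fm that])
  have t0: "(\<integral>x. indicator E x \<partial>distr \<gamma> borel fst) = (\<integral>p. indicator E (fst p) \<partial>\<gamma> :: real)" by (rule tr) measurable
  have t1: "(\<integral>x. indicator E x * fst x \<partial>distr \<gamma> borel fst) = (\<integral>p. indicator E (fst p) * fst (fst p) \<partial>\<gamma>)" by (rule tr) measurable
  have t2: "(\<integral>x. indicator E x * snd x \<partial>distr \<gamma> borel fst) = (\<integral>p. indicator E (fst p) * snd (fst p) \<partial>\<gamma>)" by (rule tr) measurable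
  have t12: "(\<integral>x. indicator E x * (fst x * snd x) \<partial>distr \<gamma> borel fst) = (\<integral>p. indicator E (fst p) * (fst (fst p) * snd (fst p)) \<partial>\<gamma>)" by (rule tr) measurable
  have "0 < (\<integral>p. indicator E (fst p) \<partial>\<gamma> :: real)" using pos unfolding t0 .
  from coarsen[OF g opt E this] show ?thesis unfolding t0 t1 t2 t12 .
qed

lemma cell_cov:
  fixes \<mu> :: "r2 measure"
  assumes fm: "finite_measure \<mu>" and sm: "sets \<mu> = sets borel"
    and T[measurable]: "T \<in> sets borel"
    and h0: "0 \<le> h" and Tc: "\<And>x. x \<in> T \<Longrightarrow> a1 \<le> fst x \<and> fst x \<le> a1 + h \<and> a2 \<le> snd x \<and> snd x \<le> a2 + h"
  shows "(\<integral>x. indicator T x \<partial>\<mu>) * (\<integral>x. indicator T x * (fst x * snd x) \<partial>\<mu>)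
       - (\<integral>x. indicator T x * fst x \<partial>\<mu>) * (\<integral>x. indicator T x * snd x \<partial>\<mu>) \<le> h^2 * (\<integral>x. indicator T x \<partial>\<mu>)^2"
proof -
  have mc: "measurable \<mu> N = measurable borel N" for N :: "'z measure"
    using sm by (rule measurable_cong_sets) auto
  have [measurable]: "T \<in> sets \<mu>" using sm by simp
  define B where "B = (\<bar>a1\<bar> + \<bar>a2\<bar> + h + 1)"
  have bnd: "\<bar>fst x\<bar> \<le> B" "\<bar>snd x\<bar> \<le> B" "\<bar>fst x - a1\<bar> \<le> B" "\<bar>snd x - a2\<bar> \<le> B" if "x \<in> T" for x
    using Tc[OF that] unfolding B_def by auto
  have ib: "integrable \<mu> (\<lambda>x. indicator T x * f x)" if [measurable]: "f \<in> borel_measurable borel" and fb: "\<And>x. x \<in> T \<Longrightarrow> \<bar>f x\<bar> \<le> C" for f :: "r2 \<Rightarrow> real" and C :: real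
    using fm by (intro finite_measure.integrable_const_bound[where B="\<bar>C\<bar>"]) (auto simp: mc indicator_def intro!: AE_I2 order_trans[OF fb])
  have Bp: "0 \<le> B" unfolding B_def using h0 by auto
  have pb: "\<bar>u * v\<bar> \<le> B * B" if "\<bar>u\<bar> \<le> B" "\<bar>v\<bar> \<le> B" for u v :: real
    using that Bp by (auto simp: abs_mult intro!: mult_mono)
  have i0: "integrable \<mu> (\<lambda>x. indicator T x :: real)" using ib[of "\<lambda>_. 1" 1] by simp
  have i1: "integrable \<mu> (\<lambda>x. indicator T x * fst x)" using ib[of fst B] bnd by auto
  have i2: "integrable \<mu> (\<lambda>x. indicator T x * snd x)" using ib[of snd B] bnd by auto
  have i12: "integrable \<mu> (\<lambda>x. indicator T x * (fst x * snd x))"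
    by (rule ib[of "\<lambda>x. fst x * snd x" "B * B"]) (auto intro!: pb bnd)
  define p :: real where "p = (\<integral>x. indicator T x \<partial>\<mu>)"
  define U1 where "U1 = (\<integral>x. indicator T x * (fst x - a1) \<partial>\<mu>)"
  define U2 where "U2 = (\<integral>x. indicator T x * (snd x - a2) \<partial>\<mu>)"
  define U12 where "U12 = (\<integral>x. indicator T x * ((fst x - a1) * (snd x - a2)) \<partial>\<mu>)"
  have e1: "(\<integral>x. indicator T x * fst x \<partial>\<mu>) = U1 + a1 * p"
  proof -
    have "(\<integral>x. indicator T x * fst x \<partial>\<mu>) = (\<integral>x. indicator T x * (fst x - a1) + a1 * indicator T x \<partial>\<mu>)"
      by (rule Bochner_Integration.integral_cong) (auto simp: algebra_simps)
    also have "\<dots> = U1 + a1 * p" unfolding U1_def p_def using i0 i1 by (simp add: right_diff_distrib)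
    finally show ?thesis .
  qed
  have e2: "(\<integral>x. indicator T x * snd x \<partial>\<mu>) = U2 + a2 * p"
  proof -
    have "(\<integral>x. indicator T x * snd x \<partial>\<mu>) = (\<integral>x. indicator T x * (snd x - a2) + a2 * indicator T x \<partial>\<mu>)"
      by (rule Bochner_Integration.integral_cong) (auto simp: algebra_simps)
    also have "\<dots> = U2 + a2 * p" unfolding U2_def p_def using i0 i2 by (simp add: right_diff_distrib)
    finally show ?thesis .
  qed
  have e12: "(\<integral>x. indicator T x * (fst x * snd x) \<partial>\<mu>) = U12 + a1 * U2 + a2 * U1 + a1 * a2 * p"
  proof -
    have "(\<integral>x. indicator T x * (fst x * snd x) \<partial>\<mu>) = (\<integral>x. indicator T x * (fst x * snd x) - a2 * (indicator T x * fst x) - a1 * (indicator T x * snd x) + a1 * a2 * indicator T x + a1 * (indicator T x * snd x - a2 * indicator T x) + a2 * (indicator T x * fst x - a1 * indicator T x) + a1 * a2 * indicator T x \<partial>\<mu>)"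
      by (rule Bochner_Integration.integral_cong) (auto simp: algebra_simps)
    also have "\<dots> = (\<integral>x. indicator T x * (fst x * snd x) \<partial>\<mu>) - a2 * (\<integral>x. indicator T x * fst x \<partial>\<mu>) - a1 * (\<integral>x. indicator T x * snd x \<partial>\<mu>) + a1 * a2 * p
       + a1 * ((\<integral>x. indicator T x * snd x \<partial>\<mu>) - a2 * p) + a2 * ((\<integral>x. indicator T x * fst x \<partial>\<mu>) - a1 * p) + a1 * a2 * p"
      unfolding p_def using i0 i1 i2 i12 by simp
    also have "(\<integral>x. indicator T x * (fst x * snd x) \<partial>\<mu>) - a2 * (\<integral>x. indicator T x * fst x \<partial>\<mu>) - a1 * (\<integral>x. indicator T x * snd x \<partial>\<mu>) + a1 * a2 * p = U12"
    proof -
      have "U12 = (\<integral>x. indicator T x * (fst x * snd x) - a2 * (indicator T x * fst x) - a1 * (indicator T x * snd x) + a1 * a2 * indicator T x \<partial>\<mu>)"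
        unfolding U12_def by (rule Bochner_Integration.integral_cong) (auto simp: algebra_simps)
      also have "\<dots> = (\<integral>x. indicator T x * (fst x * snd x) \<partial>\<mu>) - a2 * (\<integral>x. indicator T x * fst x \<partial>\<mu>) - a1 * (\<integral>x. indicator T x * snd x \<partial>\<mu>) + a1 * a2 * p"
        unfolding p_def using i0 i1 i2 i12 by simp
      finally show ?thesis by simp
    qed
    finally show ?thesis using e1 e2 by (simp add: algebra_simps)
  qed
  have U1p: "0 \<le> U1" unfolding U1_def by (rule Bochner_Integration.integral_nonneg) (auto simp: indicator_def dest: Tc)
  have U2p: "0 \<le> U2" unfolding U2_def by (rule Bochner_Integration.integral_nonneg) (auto simp: indicator_def dest: Tc)
  have U12b: "U12 \<le> h^2 * p"
  proof -
    have "U12 \<le> (\<integral>x. h^2 * indicator T x \<partial>\<mu>)" unfolding U12_def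
    proof (rule Bochner_Integration.integral_mono)
      show "integrable \<mu> (\<lambda>x. indicator T x * ((fst x - a1) * (snd x - a2)))"
        by (rule ib[of "\<lambda>x. (fst x - a1) * (snd x - a2)" "B * B"]) (auto intro!: pb bnd)
      show "integrable \<mu> (\<lambda>x. h^2 * indicator T x)" using i0 by simp
      fix x show "indicator T x * ((fst x - a1) * (snd x - a2)) \<le> h^2 * indicator T x"
        using Tc[of x] by (auto simp: indicator_def power2_eq_square intro: mult_mono)
    qed
    also have "\<dots> = h^2 * p" unfolding p_def by simp
    finally show ?thesis .
  qed
  have p0: "0 \<le> p" unfolding p_def by (rule Bochner_Integration.integral_nonneg) auto
  have "p * (U12 + a1 * U2 + a2 * U1 + a1 * a2 * p) - (U1 + a1 * p) * (U2 + a2 * p) = p * U12 - U1 * U2"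
    by (simp add: algebra_simps)
  also have "\<dots> \<le> h^2 * p^2" using U1p U2p U12b p0
    by (smt (verit, best) mult_left_mono mult_nonneg_nonneg power2_eq_square mult.assoc mult.commute)
  finally show ?thesis unfolding e1 e2 e12 p_def[symmetric] .
qed



lemma alg_contra:
  fixes pA pB SA1 SA2 SA12 SB1 SB2 SB12 hA hB \<eta> s t :: real
  assumes pA: "pA > 0" and pB: "pB > 0" and eta: "\<eta> > 0"
    and cA: "pA * SA12 - SA1 * SA2 \<le> hA^2 * pA^2"
    and cB: "pB * SB12 - SB1 * SB2 \<le> hB^2 * pB^2"
    and a1: "(s + \<eta>) * pA \<le> SA1" and b1: "SB1 \<le> s * pB"
    and a2: "SA2 \<le> t * pA" and b2: "(t + \<eta>) * pB \<le> SB2"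
    and cov: "(SA1 + SB1) * (SA2 + SB2) \<le> (pA + pB) * (SA12 + SB12)"
  shows "\<eta>^2 * pA * pB \<le> hA^2 * pA * (pA + pB) + hB^2 * pB * (pA + pB)"
proof -
  define X where "X = pB * SA1 - pA * SB1"
  define Y where "Y = pB * SA2 - pA * SB2"
  define c where "c = \<eta> * pA * pB"
  have c0: "0 \<le> c" unfolding c_def using pA pB eta by simp
  have "pB * ((s + \<eta>) * pA) \<le> pB * SA1" using a1 pB by (intro mult_left_mono) auto
  moreover have "pA * SB1 \<le> pA * (s * pB)" using b1 pA by (intro mult_left_mono) auto
  ultimately have X: "c \<le> X" unfolding X_def c_def by (simp add: algebra_simps)
  have "pB * SA2 \<le> pB * (t * pA)" using a2 pB by (intro mult_left_mono) auto
  moreover have "pA * ((t + \<eta>) * pB) \<le> pA * SB2" using b2 pA by (intro mult_left_mono) auto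
  ultimately have Y: "Y \<le> - c" unfolding Y_def c_def by (simp add: algebra_simps)
  have "X * Y \<le> X * (- c)" using X Y c0 by (intro mult_left_mono) auto
  also have "\<dots> \<le> c * (- c)" using X c0 by (intro mult_right_mono_neg) auto
  finally have XY: "X * Y \<le> - (c^2)" by (simp add: power2_eq_square)
  define tot where "tot = (pA + pB) * (SA12 + SB12) - (SA1 + SB1) * (SA2 + SB2)"
  have tot0: "0 \<le> tot" unfolding tot_def using cov by simp
  have id: "pA * pB * tot = (pA * SA12 - SA1 * SA2) * (pB * (pA + pB)) + (pB * SB12 - SB1 * SB2) * (pA * (pA + pB)) + X * Y"
    unfolding tot_def X_def Y_def by (simp add: algebra_simps)
  have "(pA * SA12 - SA1 * SA2) * (pB * (pA + pB)) \<le> (hA^2 * pA^2) * (pB * (pA + pB))"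
    using cA pA pB by (intro mult_right_mono) auto
  moreover have "(pB * SB12 - SB1 * SB2) * (pA * (pA + pB)) \<le> (hB^2 * pB^2) * (pA * (pA + pB))"
    using cB pA pB by (intro mult_right_mono) auto
  moreover have "0 \<le> pA * pB * tot" using pA pB tot0 by simp
  ultimately have "0 \<le> (hA^2 * pA^2) * (pB * (pA + pB)) + (hB^2 * pB^2) * (pA * (pA + pB)) - c^2"
    using id XY by linarith
  also have "\<dots> = (pA * pB) * (hA^2 * pA * (pA + pB) + hB^2 * pB * (pA + pB) - \<eta>^2 * pA * pB)"
    unfolding c_def by (simp add: power2_eq_square algebra_simps)
  finally have "0 \<le> (pA * pB) * (hA^2 * pA * (pA + pB) + hB^2 * pB * (pA + pB) - \<eta>^2 * pA * pB)" .
  then have "(pA * pB) * 0 \<le> (pA * pB) * (hA^2 * pA * (pA + pB) + hB^2 * pB * (pA + pB) - \<eta>^2 * pA * pB)" by simp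
  then have "0 \<le> hA^2 * pA * (pA + pB) + hB^2 * pB * (pA + pB) - \<eta>^2 * pA * pB"
    using mult_le_cancel_left_pos[OF mult_pos_pos[OF pA pB]] by blast
  then show ?thesis by simp
qed

lemma scale_contra:
  fixes pA pB hA hB \<eta> PA L :: real
  assumes pA: "0 < pA" "pA \<le> 1" and pB: "0 < pB" "pB \<le> 1" and eta: "0 < \<eta>" and L: "0 < L" and PA: "0 \<le> PA"
    and hA: "hA^2 = \<eta>^2 * pB / 8"
    and hB1: "hB^2 \<le> \<eta>^2 / 8" and hB2: "hB^2 \<le> \<eta>^4 * PA / (1024 * L^2)"
    and pAlow: "PA * hA^2 / (16 * L^2) \<le> pA"
  shows "hA^2 * pA * (pA + pB) + hB^2 * pB * (pA + pB) < \<eta>^2 * pA * pB"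
proof (cases "pB \<le> pA")
  case True
  have "hA^2 * pA \<le> hA^2" using pA by (intro mult_left_le) auto
  then have t1: "hA^2 * pA \<le> \<eta>^2 * pB / 8" using hA by linarith
  have t2: "hB^2 * pB \<le> \<eta>^2 / 8 * pB" using hB1 pB by (intro mult_right_mono) auto
  have "hA^2 * pA * (pA + pB) + hB^2 * pB * (pA + pB) = (hA^2 * pA + hB^2 * pB) * (pA + pB)" by (simp add: algebra_simps)
  also have "\<dots> \<le> (\<eta>^2 * pB / 4) * (pA + pB)"
  proof (rule mult_right_mono)
    show "hA^2 * pA + hB^2 * pB \<le> \<eta>^2 * pB / 4" using t1 t2 by linarith
  qed (use pA pB in auto)
  also have "\<dots> \<le> (\<eta>^2 * pB / 4) * (2 * pA)" using True pB eta by (intro mult_left_mono) auto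
  also have "\<dots> < \<eta>^2 * pA * pB" using pA pB eta by (simp add: algebra_simps)
  finally show ?thesis .
next
  case False
  have "hA^2 * pA = (\<eta>^2 * pA / 8) * pB" using hA by (simp add: algebra_simps)
  also have "\<dots> \<le> \<eta>^2 * pA / 8" using pA pB eta by (intro mult_left_le) auto
  finally have t1: "hA^2 * pA \<le> \<eta>^2 * pA / 8" .
  have "PA * (\<eta>^2 * pB) \<le> 128 * L^2 * pA" using pAlow hA L by (simp add: field_simps)
  have t2: "hB^2 * pB \<le> \<eta>^4 * PA / (1024 * L^2) * pB" using hB2 pB by (intro mult_right_mono) auto
  also have "\<dots> = \<eta>^2 / (1024 * L^2) * (PA * (\<eta>^2 * pB))" by (simp add: power2_eq_square power4_eq_xxxx algebra_simps)
  also have "\<dots> \<le> \<eta>^2 / (1024 * L^2) * (128 * L^2 * pA)"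
    using \<open>PA * (\<eta>^2 * pB) \<le> 128 * L^2 * pA\<close> L by (intro mult_left_mono) auto
  also have "\<dots> = \<eta>^2 * pA / 8" using L by (simp add: field_simps)
  finally have t2: "hB^2 * pB \<le> \<eta>^2 * pA / 8" .
  have "hA^2 * pA * (pA + pB) + hB^2 * pB * (pA + pB) = (hA^2 * pA + hB^2 * pB) * (pA + pB)" by (simp add: algebra_simps)
  also have "\<dots> \<le> (\<eta>^2 * pA / 4) * (pA + pB)"
  proof (rule mult_right_mono)
    show "hA^2 * pA + hB^2 * pB \<le> \<eta>^2 * pA / 4" using t1 t2 by linarith
  qed (use pA pB in auto)
  also have "\<dots> \<le> (\<eta>^2 * pA / 4) * (2 * pB)" using False pA eta by (intro mult_left_mono) auto
  also have "\<dots> < \<eta>^2 * pA * pB" using pA pB eta by (simp add: algebra_simps)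
  finally show ?thesis .
qed



definition cellbox :: "real \<Rightarrow> real \<Rightarrow> real \<Rightarrow> r2 set" where
  "cellbox a1 a2 h = {x. a1 \<le> fst x \<and> fst x < a1 + h \<and> a2 \<le> snd x \<and> snd x < a2 + h}"

lemma cellbox_borel[measurable]: "cellbox a1 a2 h \<in> sets borel"
  unfolding cellbox_def by measurable

lemma cover_idx:
  fixes u :: real and K :: nat
  assumes "0 \<le> u" "u < real K"
  shows "\<exists>i<K. real i \<le> u \<and> u < real i + 1"
proof -
  define i where "i = nat \<lfloor>u\<rfloor>"
  have ri: "real i = of_int \<lfloor>u\<rfloor>" unfolding i_def using assms by simp
  have "real i \<le> u" "u < real i + 1" unfolding ri by linarith+
  moreover have "i < K" using \<open>real i \<le> u\<close> assms(2) by linarith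
  ultimately show ?thesis by blast
qed

lemma pigeon:
  fixes \<mu> :: "r2 measure" and S :: "r2 set"
  assumes fm: "finite_measure \<mu>" and sm: "sets \<mu> = sets borel" and S[measurable]: "S \<in> sets borel"
    and Sb: "\<And>x. x \<in> S \<Longrightarrow> -L \<le> fst x \<and> fst x < L \<and> -L \<le> snd x \<and> snd x < L"
    and h: "0 < h" and hL: "h \<le> 2 * L"
  shows "\<exists>a1 a2. measure \<mu> S * h^2 / (16 * L^2) \<le> measure \<mu> (S \<inter> cellbox a1 a2 h)"
proof (rule ccontr)
  assume neg: "\<not> ?thesis"
  have L: "0 < L" using h hL by simp
  define K where "K = nat \<lceil>2 * L / h\<rceil>"
  have q: "0 < 2 * L / h" using L h by simp
  have rK: "real K = of_int \<lceil>2 * L / h\<rceil>" unfolding K_def using q by (simp add: of_nat_nat)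
  have K1: "2 * L / h \<le> real K" unfolding rK using ceiling_correct[of "2 * L / h"] by linarith
  have K2: "real K < 2 * L / h + 1" unfolding rK using ceiling_correct[of "2 * L / h"] by linarith
  have "1 \<le> 2 * L / h" using h hL by (simp add: field_simps)
  then have "real K * h \<le> 4 * L" using K2 h by (simp add: field_simps)
  then have "(real K * h)^2 \<le> (4 * L)^2"
    using h by (intro power_mono) auto
  then have Kh: "(real K * h)^2 \<le> 16 * L^2" by (simp add: power_mult_distrib)
  have "0 < real K" using K1 q by linarith
  then have Kpos: "0 < K" by simp
  define I where "I = {..<K} \<times> {..<K}"
  define cell where "cell ij = S \<inter> cellbox (-L + real (fst ij) * h) (-L + real (snd ij) * h) h" for ij :: "nat \<times> nat"
  have cov: "S \<subseteq> (\<Union>ij\<in>I. cell ij)"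
  proof
    fix x assume x: "x \<in> S"
    have u1: "0 \<le> (fst x + L) / h" "(fst x + L) / h < real K"
      using Sb[OF x] h K1 by (auto simp: field_simps)
    have u2: "0 \<le> (snd x + L) / h" "(snd x + L) / h < real K"
      using Sb[OF x] h K1 by (auto simp: field_simps)
    obtain i where i: "i < K" "real i \<le> (fst x + L) / h" "(fst x + L) / h < real i + 1"
      using cover_idx[OF u1] by blast
    obtain j where j: "j < K" "real j \<le> (snd x + L) / h" "(snd x + L) / h < real j + 1"
      using cover_idx[OF u2] by blast
    have "real i * h \<le> fst x + L" "fst x + L < (real i + 1) * h"
      using i h by (simp_all add: pos_le_divide_eq pos_divide_less_eq)
    moreover have "real j * h \<le> snd x + L" "snd x + L < (real j + 1) * h"
      using j h by (simp_all add: pos_le_divide_eq pos_divide_less_eq)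
    ultimately have "x \<in> cell (i, j)" unfolding cell_def cellbox_def using x by (simp add: algebra_simps)
    then show "x \<in> (\<Union>ij\<in>I. cell ij)" using i j unfolding I_def by auto
  qed
  have fI: "finite I" and neI: "I \<noteq> {}" unfolding I_def using Kpos by auto
  have cI: "card I = K * K" unfolding I_def by (simp add: card_cartesian_product)
  have "cell ij \<in> sets \<mu>" for ij unfolding cell_def sm using S cellbox_borel by (rule sets.Int)
  then have cs: "cell ` I \<subseteq> sets \<mu>" by blast
  define M0 where "M0 = measure \<mu> S * h^2 / (16 * L^2)"
  have nb: "measure \<mu> (cell ij) < M0" for ij
  proof -
    have "\<not> M0 \<le> measure \<mu> (cell ij)" using neg unfolding cell_def M0_def by blast
    then show ?thesis by simp
  qed
  have "measure \<mu> S \<le> measure \<mu> (\<Union>ij\<in>I. cell ij)"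
    by (rule finite_measure.finite_measure_mono[OF fm cov]) (use cs fI in blast)
  also have "\<dots> \<le> (\<Sum>ij\<in>I. measure \<mu> (cell ij))"
    using finite_measure.finite_measure_subadditive_finite[OF fm fI cs] .
  also have "\<dots> < (\<Sum>ij\<in>I. M0)"
    by (rule sum_strict_mono[OF fI neI nb])
  also have "\<dots> = real (K * K) * M0" using cI by simp
  also have "\<dots> = measure \<mu> S * ((real K * h)^2 / (16 * L^2))" unfolding M0_def by (simp add: power2_eq_square)
  also have "\<dots> \<le> measure \<mu> S * 1"
  proof (rule mult_left_mono)
    show "(real K * h)^2 / (16 * L^2) \<le> 1" using Kh L by (simp add: pos_divide_le_eq)
  qed simp
  finally show False by simp
qed



lemma pos_piece:
  fixes \<mu> :: "'a measure" and Q :: "nat \<Rightarrow> 'a set"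
  assumes fm: "finite_measure \<mu>" and P: "0 < measure \<mu> P" and Q: "\<And>n. Q n \<in> sets \<mu>"
    and cv: "P \<subseteq> (\<Union>n. Q n)" and Ps: "P \<in> sets \<mu>"
  shows "\<exists>n. 0 < measure \<mu> (Q n)"
proof (rule ccontr)
  assume "\<not> ?thesis"
  then have z: "measure \<mu> (Q n) = 0" for n by (simp add: not_less measure_le_0_iff)
  have "measure \<mu> P \<le> measure \<mu> (\<Union>n. Q n)"
  proof (rule finite_measure.finite_measure_mono[OF fm cv])
    show "(\<Union>n. Q n) \<in> sets \<mu>" by (rule sets.countable_UN) (auto simp: Q)
  qed
  also have "\<dots> \<le> (\<Sum>n. measure \<mu> (Q n))"
    using Q z by (intro finite_measure.finite_measure_subadditive_countably[OF fm]) auto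
  also have "\<dots> = 0" using z by simp
  finally show False using P by simp
qed

lemma int_bdd:
  fixes \<mu> :: "r2 measure" and f :: "r2 \<Rightarrow> real" and C :: real
  assumes fm: "finite_measure \<mu>" and sm: "sets \<mu> = sets borel" and T[measurable]: "T \<in> sets borel"
    and f[measurable]: "f \<in> borel_measurable borel" and fb: "\<And>x. x \<in> T \<Longrightarrow> \<bar>f x\<bar> \<le> C"
  shows "integrable \<mu> (\<lambda>x. indicator T x * f x)"
proof -
  have mc: "measurable \<mu> N = measurable borel N" for N :: "'z measure"
    using sm by (rule measurable_cong_sets) auto
  show ?thesis
    using fm by (intro finite_measure.integrable_const_bound[where B="\<bar>C\<bar>"]) (auto simp: mc indicator_def intro!: AE_I2 order_trans[OF fb])
qed

lemma int_lower:
  fixes \<mu> :: "r2 measure" and f :: "r2 \<Rightarrow> real" and C c :: real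
  assumes fm: "finite_measure \<mu>" and sm: "sets \<mu> = sets borel" and T[measurable]: "T \<in> sets borel"
    and f[measurable]: "f \<in> borel_measurable borel" and fb: "\<And>x. x \<in> T \<Longrightarrow> \<bar>f x\<bar> \<le> C"
    and lo: "\<And>x. x \<in> T \<Longrightarrow> c \<le> f x"
  shows "c * measure \<mu> T \<le> (\<integral>x. indicator T x * f x \<partial>\<mu>)"
proof -
  have sp: "space \<mu> = UNIV" using sets_eq_imp_space_eq[OF sm] by simp
  have "c * measure \<mu> T = (\<integral>x. indicator T x * c \<partial>\<mu>)" by (simp add: sp mult.commute)
  also have "\<dots> \<le> (\<integral>x. indicator T x * f x \<partial>\<mu>)"
  proof (rule Bochner_Integration.integral_mono)
    show "integrable \<mu> (\<lambda>x. indicator T x * c)" by (rule int_bdd[OF fm sm T, of "\<lambda>_. c" "\<bar>c\<bar>"]) auto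
    show "integrable \<mu> (\<lambda>x. indicator T x * f x)" by (rule int_bdd[OF fm sm T f fb])
  qed (auto simp: indicator_def lo)
  finally show ?thesis .
qed

lemma int_upper:
  fixes \<mu> :: "r2 measure" and f :: "r2 \<Rightarrow> real" and C c :: real
  assumes fm: "finite_measure \<mu>" and sm: "sets \<mu> = sets borel" and T[measurable]: "T \<in> sets borel"
    and f[measurable]: "f \<in> borel_measurable borel" and fb: "\<And>x. x \<in> T \<Longrightarrow> \<bar>f x\<bar> \<le> C"
    and up: "\<And>x. x \<in> T \<Longrightarrow> f x \<le> c"
  shows "(\<integral>x. indicator T x * f x \<partial>\<mu>) \<le> c * measure \<mu> T"
proof -
  have sp: "space \<mu> = UNIV" using sets_eq_imp_space_eq[OF sm] by simp
  have "(\<integral>x. indicator T x * f x \<partial>\<mu>) \<le> (\<integral>x. indicator T x * c \<partial>\<mu>)"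
  proof (rule Bochner_Integration.integral_mono)
    show "integrable \<mu> (\<lambda>x. indicator T x * c)" by (rule int_bdd[OF fm sm T, of "\<lambda>_. c" "\<bar>c\<bar>"]) auto
    show "integrable \<mu> (\<lambda>x. indicator T x * f x)" by (rule int_bdd[OF fm sm T f fb])
  qed (auto simp: indicator_def up)
  also have "\<dots> = c * measure \<mu> T" by (simp add: sp mult.commute)
  finally show ?thesis .
qed



lemma comonotone:
  fixes \<mu> :: "r2 measure" and s t :: real
  assumes ps: "prob_space \<mu>" and sm: "sets \<mu> = sets borel"
    and cov: "\<And>E. E \<in> sets borel \<Longrightarrow> 0 < measure \<mu> E \<Longrightarrow>
      (\<integral>x. indicator E x * fst x \<partial>\<mu>) * (\<integral>x. indicator E x * snd x \<partial>\<mu>) \<le> measure \<mu> E * (\<integral>x. indicator E x * (fst x * snd x) \<partial>\<mu>)"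
  shows "measure \<mu> {x. s < fst x \<and> snd x \<le> t} = 0 \<or> measure \<mu> {x. fst x \<le> s \<and> t < snd x} = 0"
proof (rule ccontr)
  assume neg: "\<not> ?thesis"
  have fm: "finite_measure \<mu>" using ps by (simp add: prob_space_def)
  have sp: "space \<mu> = UNIV" using sets_eq_imp_space_eq[OF sm] by simp
  have le1: "measure \<mu> X \<le> 1" for X using prob_space.prob_le_1[OF ps] .
  have P0: "0 < measure \<mu> {x. s < fst x \<and> snd x \<le> t}" "0 < measure \<mu> {x. fst x \<le> s \<and> t < snd x}"
  proof -
    have n1: "measure \<mu> {x. s < fst x \<and> snd x \<le> t} \<noteq> 0" "measure \<mu> {x. fst x \<le> s \<and> t < snd x} \<noteq> 0"
      using neg by auto
    then show "0 < measure \<mu> {x. s < fst x \<and> snd x \<le> t}" "0 < measure \<mu> {x. fst x \<le> s \<and> t < snd x}"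
      using measure_nonneg[of \<mu> "{x. s < fst x \<and> snd x \<le> t}"] measure_nonneg[of \<mu> "{x. fst x \<le> s \<and> t < snd x}"]
      by linarith+
  qed
  define QA where "QA n = {x::r2. s + 1 / real (Suc n) \<le> fst x \<and> snd x \<le> t \<and> - real n \<le> fst x \<and> fst x < real n \<and> - real n \<le> snd x \<and> snd x < real n}" for n
  define QB where "QB n = {x::r2. fst x \<le> s \<and> t + 1 / real (Suc n) \<le> snd x \<and> - real n \<le> fst x \<and> fst x < real n \<and> - real n \<le> snd x \<and> snd x < real n}" for n
  have QAm[measurable]: "QA n \<in> sets borel" for n unfolding QA_def by measurable
  have QBm[measurable]: "QB n \<in> sets borel" for n unfolding QB_def by measurable
  have big: "\<exists>n. 1 / real (Suc n) < d \<and> \<bar>a\<bar> < real n \<and> \<bar>b\<bar> < real n" if d: "0 < d" for d a b :: real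
  proof -
    obtain n where n: "max (1 / d) (max \<bar>a\<bar> \<bar>b\<bar>) < real n" using reals_Archimedean2 by blast
    have "1 / d < real (Suc n)" using n by simp
    then have "1 < real (Suc n) * d" using d by (simp add: pos_divide_less_eq)
    then have "1 / real (Suc n) < d" by (simp add: divide_less_eq mult.commute)
    then show ?thesis using n by auto
  qed
  have cvA: "{x. s < fst x \<and> snd x \<le> t} \<subseteq> (\<Union>n. QA n)"
  proof
    fix x :: r2 assume "x \<in> {x. s < fst x \<and> snd x \<le> t}"
    then have x: "s < fst x" "snd x \<le> t" by auto
    obtain n where "1 / real (Suc n) < fst x - s" "\<bar>fst x\<bar> < real n" "\<bar>snd x\<bar> < real n" using big[of "fst x - s"] x by auto
    then have "x \<in> QA n" unfolding QA_def using x by auto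
    then show "x \<in> (\<Union>n. QA n)" by blast
  qed
  have cvB: "{x. fst x \<le> s \<and> t < snd x} \<subseteq> (\<Union>n. QB n)"
  proof
    fix x :: r2 assume "x \<in> {x. fst x \<le> s \<and> t < snd x}"
    then have x: "fst x \<le> s" "t < snd x" by auto
    obtain n where "1 / real (Suc n) < snd x - t" "\<bar>fst x\<bar> < real n" "\<bar>snd x\<bar> < real n" using big[of "snd x - t"] x by auto
    then have "x \<in> QB n" unfolding QB_def using x by auto
    then show "x \<in> (\<Union>n. QB n)" by blast
  qed
  obtain nA where nA: "0 < measure \<mu> (QA nA)"
    using pos_piece[OF fm P0(1) _ cvA] sm by auto
  obtain nB where nB: "0 < measure \<mu> (QB nB)"
    using pos_piece[OF fm P0(2) _ cvB] sm by auto
  define \<eta> where "\<eta> = min (1 / real (Suc nA)) (1 / real (Suc nB))"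
  define L where "L = real (max nA nB) + 1"
  have eta: "0 < \<eta>" "\<eta> \<le> 1" unfolding \<eta>_def by (auto simp: min_def)
  have L: "1 \<le> L" unfolding L_def by simp
  define A1 where "A1 = QA nA"
  define B1 where "B1 = QB nB"
  have A1m[measurable]: "A1 \<in> sets borel" and B1m[measurable]: "B1 \<in> sets borel" unfolding A1_def B1_def by auto
  have A1p: "s + \<eta> \<le> fst x \<and> snd x \<le> t \<and> -L \<le> fst x \<and> fst x < L \<and> -L \<le> snd x \<and> snd x < L" if "x \<in> A1" for x
    using that unfolding A1_def QA_def \<eta>_def L_def by auto
  have B1p: "fst x \<le> s \<and> t + \<eta> \<le> snd x \<and> -L \<le> fst x \<and> fst x < L \<and> -L \<le> snd x \<and> snd x < L" if "x \<in> B1" for x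
    using that unfolding B1_def QB_def \<eta>_def L_def by auto
  have PA: "0 < measure \<mu> A1" and PB: "0 < measure \<mu> B1" using nA nB unfolding A1_def B1_def by auto
  have PA1: "measure \<mu> A1 \<le> 1" and PB1: "measure \<mu> B1 \<le> 1" using le1 by auto
  define hB2 where "hB2 = min (\<eta>^2 / 8) (\<eta>^4 * measure \<mu> A1 / (1024 * L^2))"
  have hB2p: "0 < hB2" unfolding hB2_def using eta PA L by auto
  define hB where "hB = sqrt hB2"
  have hB: "0 < hB" "hB^2 = hB2" unfolding hB_def using hB2p by auto
  have hB1: "hB^2 \<le> \<eta>^2 / 8" and hB2': "hB^2 \<le> \<eta>^4 * measure \<mu> A1 / (1024 * L^2)" unfolding hB(2) hB2_def by auto
  have sq2L: "h \<le> 2 * L" if "0 < h" "h^2 \<le> 1" for h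
  proof -
    have "1 \<le> 2 * L" using L by simp
    then have "1 \<le> (2 * L)^2" by (rule one_le_power)
    then have "h^2 \<le> (2 * L)^2" using that by linarith
    then show ?thesis by (rule power2_le_imp_le) (use L in simp)
  qed
  have e2: "\<eta>^2 \<le> 1" using eta by (simp add: power_le_one)
  have hBL: "hB \<le> 2 * L" using sq2L[OF hB(1)] hB1 e2 by auto
  have B1b: "-L \<le> fst x \<and> fst x < L \<and> -L \<le> snd x \<and> snd x < L" if "x \<in> B1" for x using B1p[OF that] by auto
  have A1b: "-L \<le> fst x \<and> fst x < L \<and> -L \<le> snd x \<and> snd x < L" if "x \<in> A1" for x using A1p[OF that] by auto
  obtain b1 b2 where pBlow: "measure \<mu> B1 * hB^2 / (16 * L^2) \<le> measure \<mu> (B1 \<inter> cellbox b1 b2 hB)"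
    using pigeon[OF fm sm B1m B1b hB(1) hBL] by auto
  define TB where "TB = B1 \<inter> cellbox b1 b2 hB"
  define pB where "pB = measure \<mu> TB"
  have "0 < measure \<mu> B1 * hB^2 / (16 * L^2)" using PB hB L by (intro divide_pos_pos mult_pos_pos) auto
  then have pB: "0 < pB" using pBlow unfolding pB_def TB_def by linarith
  have pB1: "pB \<le> 1" unfolding pB_def using le1 .
  define hA where "hA = sqrt (\<eta>^2 * pB / 8)"
  have hA: "0 < hA" "hA^2 = \<eta>^2 * pB / 8" unfolding hA_def using eta pB by auto
  have "\<eta>^2 * pB \<le> 1" using e2 pB1 pB by (intro mult_le_one) auto
  then have "hA^2 \<le> 1" unfolding hA(2) by simp
  then have hAL: "hA \<le> 2 * L" using sq2L[OF hA(1)] by auto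
  obtain a1 a2 where pAlow: "measure \<mu> A1 * hA^2 / (16 * L^2) \<le> measure \<mu> (A1 \<inter> cellbox a1 a2 hA)"
    using pigeon[OF fm sm A1m A1b hA(1) hAL] by auto
  define TA where "TA = A1 \<inter> cellbox a1 a2 hA"
  define pA where "pA = measure \<mu> TA"
  have "0 < measure \<mu> A1 * hA^2 / (16 * L^2)" using PA hA L by (intro divide_pos_pos mult_pos_pos) auto
  then have pA: "0 < pA" using pAlow unfolding pA_def TA_def by linarith
  have pA1: "pA \<le> 1" unfolding pA_def using le1 .
  have [measurable]: "TA \<in> sets borel" "TB \<in> sets borel" unfolding TA_def TB_def by auto
  have TAp: "s + \<eta> \<le> fst x \<and> snd x \<le> t \<and> -L \<le> fst x \<and> fst x < L \<and> -L \<le> snd x \<and> snd x < L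
      \<and> a1 \<le> fst x \<and> fst x \<le> a1 + hA \<and> a2 \<le> snd x \<and> snd x \<le> a2 + hA" if "x \<in> TA" for x
    using that A1p unfolding TA_def cellbox_def by auto
  have TBp: "fst x \<le> s \<and> t + \<eta> \<le> snd x \<and> -L \<le> fst x \<and> fst x < L \<and> -L \<le> snd x \<and> snd x < L
      \<and> b1 \<le> fst x \<and> fst x \<le> b1 + hB \<and> b2 \<le> snd x \<and> snd x \<le> b2 + hB" if "x \<in> TB" for x
    using that B1p unfolding TB_def cellbox_def by auto
  have disj: "TA \<inter> TB = {}" using TAp TBp eta by force
  define E where "E = TA \<union> TB"
  have [measurable]: "E \<in> sets borel" unfolding E_def by auto
  have pE: "measure \<mu> E = pA + pB" unfolding E_def pA_def pB_def
    using disj sm by (intro finite_measure.finite_measure_Union[OF fm]) auto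
  have ind: "indicator E x = (indicator TA x + indicator TB x :: real)" for x
    unfolding E_def using disj by (auto simp: indicator_def)
  have bx: "\<bar>fst x\<bar> \<le> L" "\<bar>snd x\<bar> \<le> L" "\<bar>fst x * snd x\<bar> \<le> L * L" if "x \<in> TA \<or> x \<in> TB" for x
  proof -
    have hx: "-L \<le> fst x \<and> fst x < L \<and> -L \<le> snd x \<and> snd x < L" using that TAp[of x] TBp[of x] by blast
    then have "\<bar>fst x\<bar> \<le> L" "\<bar>snd x\<bar> \<le> L" by auto
    then show "\<bar>fst x\<bar> \<le> L" "\<bar>snd x\<bar> \<le> L" "\<bar>fst x * snd x\<bar> \<le> L * L"
      by (auto simp: abs_mult intro!: mult_mono)
  qed
  have split: "(\<integral>x. indicator E x * f x \<partial>\<mu>) = (\<integral>x. indicator TA x * f x \<partial>\<mu>) + (\<integral>x. indicator TB x * f x \<partial>\<mu>)"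
    if [measurable]: "f \<in> borel_measurable borel" and fb: "\<And>x. x \<in> TA \<or> x \<in> TB \<Longrightarrow> \<bar>f x\<bar> \<le> L * L" for f :: "r2 \<Rightarrow> real"
  proof -
    have "integrable \<mu> (\<lambda>x. indicator TA x * f x)" by (rule int_bdd[OF fm sm _ _ fb]) auto
    moreover have "integrable \<mu> (\<lambda>x. indicator TB x * f x)" by (rule int_bdd[OF fm sm _ _ fb]) auto
    ultimately show ?thesis unfolding ind by (simp add: distrib_right)
  qed
  have LL: "L \<le> L * L" using L by (simp add: mult_le_cancel_left1)
  have bx': "\<bar>fst x\<bar> \<le> L * L" "\<bar>snd x\<bar> \<le> L * L" if "x \<in> TA \<or> x \<in> TB" for x using bx[OF that] LL by auto
  have s1: "(\<integral>x. indicator E x * fst x \<partial>\<mu>) = (\<integral>x. indicator TA x * fst x \<partial>\<mu>) + (\<integral>x. indicator TB x * fst x \<partial>\<mu>)"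
    by (rule split) (auto intro: bx')
  have s2: "(\<integral>x. indicator E x * snd x \<partial>\<mu>) = (\<integral>x. indicator TA x * snd x \<partial>\<mu>) + (\<integral>x. indicator TB x * snd x \<partial>\<mu>)"
    by (rule split) (auto intro: bx')
  have s12: "(\<integral>x. indicator E x * (fst x * snd x) \<partial>\<mu>) = (\<integral>x. indicator TA x * (fst x * snd x) \<partial>\<mu>) + (\<integral>x. indicator TB x * (fst x * snd x) \<partial>\<mu>)"
    by (rule split) (auto intro: bx)
  have pEpos: "0 < measure \<mu> E" using pE pA pB by simp
  have covE: "(\<integral>x. indicator E x * fst x \<partial>\<mu>) * (\<integral>x. indicator E x * snd x \<partial>\<mu>) \<le> measure \<mu> E * (\<integral>x. indicator E x * (fst x * snd x) \<partial>\<mu>)"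
    by (rule cov) (auto simp: pEpos)
  define SA1 where "SA1 = (\<integral>x. indicator TA x * fst x \<partial>\<mu>)"
  define SA2 where "SA2 = (\<integral>x. indicator TA x * snd x \<partial>\<mu>)"
  define SA12 where "SA12 = (\<integral>x. indicator TA x * (fst x * snd x) \<partial>\<mu>)"
  define SB1 where "SB1 = (\<integral>x. indicator TB x * fst x \<partial>\<mu>)"
  define SB2 where "SB2 = (\<integral>x. indicator TB x * snd x \<partial>\<mu>)"
  define SB12 where "SB12 = (\<integral>x. indicator TB x * (fst x * snd x) \<partial>\<mu>)"
  have c1: "(SA1 + SB1) * (SA2 + SB2) \<le> (pA + pB) * (SA12 + SB12)"
    using covE unfolding s1 s2 s12 pE SA1_def SA2_def SA12_def SB1_def SB2_def SB12_def .
  have TAm: "TA \<in> sets borel" and TBm: "TB \<in> sets borel" by auto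
  have cA: "pA * SA12 - SA1 * SA2 \<le> hA^2 * pA^2"
  proof -
    have "(\<integral>x. indicator TA x \<partial>\<mu>) * (\<integral>x. indicator TA x * (fst x * snd x) \<partial>\<mu>)
       - (\<integral>x. indicator TA x * fst x \<partial>\<mu>) * (\<integral>x. indicator TA x * snd x \<partial>\<mu>) \<le> hA^2 * (\<integral>x. indicator TA x \<partial>\<mu>)^2"
      by (rule cell_cov[OF fm sm TAm, of hA a1 a2]) (use hA TAp in auto)
    then show ?thesis unfolding SA1_def SA2_def SA12_def pA_def by (simp add: sp)
  qed
  have cB: "pB * SB12 - SB1 * SB2 \<le> hB^2 * pB^2"
  proof -
    have "(\<integral>x. indicator TB x \<partial>\<mu>) * (\<integral>x. indicator TB x * (fst x * snd x) \<partial>\<mu>)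
       - (\<integral>x. indicator TB x * fst x \<partial>\<mu>) * (\<integral>x. indicator TB x * snd x \<partial>\<mu>) \<le> hB^2 * (\<integral>x. indicator TB x \<partial>\<mu>)^2"
      by (rule cell_cov[OF fm sm TBm, of hB b1 b2]) (use hB TBp in auto)
    then show ?thesis unfolding SB1_def SB2_def SB12_def pB_def by (simp add: sp)
  qed
  have a1: "(s + \<eta>) * pA \<le> SA1" unfolding SA1_def pA_def
    by (rule int_lower[OF fm sm TAm, of fst L]) (use bx TAp in auto)
  have a2: "SA2 \<le> t * pA" unfolding SA2_def pA_def
    by (rule int_upper[OF fm sm TAm, of snd L]) (use bx TAp in auto)
  have b1: "SB1 \<le> s * pB" unfolding SB1_def pB_def
    by (rule int_upper[OF fm sm TBm, of fst L]) (use bx TBp in auto)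
  have b2: "(t + \<eta>) * pB \<le> SB2" unfolding SB2_def pB_def
    by (rule int_lower[OF fm sm TBm, of snd L]) (use bx TBp in auto)
  have r1: "\<eta>^2 * pA * pB \<le> hA^2 * pA * (pA + pB) + hB^2 * pB * (pA + pB)"
    by (rule alg_contra[OF pA pB eta(1) cA cB a1 b1 a2 b2 c1])
  have L0: "0 < L" using L by simp
  have r2: "hA^2 * pA * (pA + pB) + hB^2 * pB * (pA + pB) < \<eta>^2 * pA * pB"
    by (rule scale_contra[OF pA pA1 pB pB1 eta(1) L0 _ hA(2) hB1 hB2']) (use pAlow in \<open>auto simp: pA_def TA_def\<close>)
  show False using r1 r2 by linarith
qed



lemma layer:
  fixes M :: "r2 measure" and S1 S2 :: "(real \<times> real) set" and \<phi>1 \<phi>2 :: "real \<Rightarrow> real"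
  assumes ps: "prob_space M" and sm: "sets M = sets borel"
    and S1[measurable]: "S1 \<in> sets (borel \<Otimes>\<^sub>M borel)" and S2[measurable]: "S2 \<in> sets (borel \<Otimes>\<^sub>M borel)"
    and e1: "\<And>u. ennreal (\<phi>1 u) = emeasure lborel {s. (s, u) \<in> S1}"
    and e2: "\<And>u. ennreal (\<phi>2 u) = emeasure lborel {s. (s, u) \<in> S2}"
    and nn1: "\<And>u. 0 \<le> \<phi>1 u" and nn2: "\<And>u. 0 \<le> \<phi>2 u"
  shows "(\<integral>\<^sup>+x. ennreal (\<phi>1 (fst x) * \<phi>2 (snd x)) \<partial>M)
       = (\<integral>\<^sup>+s. (\<integral>\<^sup>+t. emeasure M {x. (s, fst x) \<in> S1 \<and> (t, snd x) \<in> S2} \<partial>lborel) \<partial>lborel)"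
proof -
  have sfM: "sigma_finite_measure M" using ps by (rule prob_space_imp_sigma_finite)
  interpret pM: pair_sigma_finite M lborel
    using sfM sigma_finite_lborel by (simp add: pair_sigma_finite_def)
  interpret pl: pair_sigma_finite M lborel
    using sfM sigma_finite_lborel by (simp add: pair_sigma_finite_def)
  have mc: "measurable M N = measurable borel N" for N :: "'z measure"
    using sm by (rule measurable_cong_sets) auto
  have fM[measurable]: "fst \<in> measurable M borel" "snd \<in> measurable M borel" by (simp_all add: mc)
  define I where "I s t x = indicator S1 (s, fst x) * (indicator S2 (t, snd x) :: ennreal)" for s t :: real and x :: r2
  have Im1[measurable]: "(\<lambda>p. I (snd (fst p)) (snd p) (fst (fst p))) \<in> borel_measurable ((M \<Otimes>\<^sub>M lborel) \<Otimes>\<^sub>M lborel)"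
    unfolding I_def by measurable
  have Im2[measurable]: "(\<lambda>p. I s (snd p) (fst p)) \<in> borel_measurable (M \<Otimes>\<^sub>M lborel)" for s
    unfolding I_def by measurable
  have Im3[measurable]: "(\<lambda>p. \<integral>\<^sup>+t. I (snd p) t (fst p) \<partial>lborel) \<in> borel_measurable (M \<Otimes>\<^sub>M lborel)"
    by measurable
  have pt: "ennreal (\<phi>1 (fst x) * \<phi>2 (snd x)) = (\<integral>\<^sup>+s. (\<integral>\<^sup>+t. I s t x \<partial>lborel) \<partial>lborel)" for x
  proof -
    have m1: "(\<lambda>s. indicator S1 (s, fst x) :: ennreal) \<in> borel_measurable lborel" by measurable
    have m2: "(\<lambda>t. indicator S2 (t, snd x) :: ennreal) \<in> borel_measurable lborel" by measurable
    have i1: "emeasure lborel {s. (s, fst x) \<in> S1} = (\<integral>\<^sup>+s. indicator S1 (s, fst x) \<partial>lborel)"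
    proof -
      have "{s. (s, fst x) \<in> S1} \<in> sets lborel" by measurable
      then have "emeasure lborel {s. (s, fst x) \<in> S1} = (\<integral>\<^sup>+s. indicator {s. (s, fst x) \<in> S1} s \<partial>lborel)" by simp
      also have "\<dots> = (\<integral>\<^sup>+s. indicator S1 (s, fst x) \<partial>lborel)" by (intro nn_integral_cong) (auto simp: indicator_def)
      finally show ?thesis .
    qed
    have i2: "emeasure lborel {s. (s, snd x) \<in> S2} = (\<integral>\<^sup>+t. indicator S2 (t, snd x) \<partial>lborel)"
    proof -
      have "{s. (s, snd x) \<in> S2} \<in> sets lborel" by measurable
      then have "emeasure lborel {s. (s, snd x) \<in> S2} = (\<integral>\<^sup>+s. indicator {s. (s, snd x) \<in> S2} s \<partial>lborel)" by simp
      also have "\<dots> = (\<integral>\<^sup>+t. indicator S2 (t, snd x) \<partial>lborel)" by (intro nn_integral_cong) (auto simp: indicator_def)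
      finally show ?thesis .
    qed
    have "ennreal (\<phi>1 (fst x) * \<phi>2 (snd x)) = ennreal (\<phi>1 (fst x)) * ennreal (\<phi>2 (snd x))"
      using nn1 nn2 by (simp add: ennreal_mult)
    also have "\<dots> = (\<integral>\<^sup>+s. indicator S1 (s, fst x) \<partial>lborel) * (\<integral>\<^sup>+t. indicator S2 (t, snd x) \<partial>lborel)"
      using e1 e2 i1 i2 by simp
    also have "\<dots> = (\<integral>\<^sup>+s. indicator S1 (s, fst x) * (\<integral>\<^sup>+t. indicator S2 (t, snd x) \<partial>lborel) \<partial>lborel)"
      by (rule nn_integral_multc[symmetric, OF m1])
    also have "\<dots> = (\<integral>\<^sup>+s. (\<integral>\<^sup>+t. I s t x \<partial>lborel) \<partial>lborel)"
      unfolding I_def by (intro nn_integral_cong nn_integral_cmult[symmetric, OF m2])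
    finally show ?thesis .
  qed
  have "(\<integral>\<^sup>+x. ennreal (\<phi>1 (fst x) * \<phi>2 (snd x)) \<partial>M) = (\<integral>\<^sup>+x. (\<integral>\<^sup>+s. (\<integral>\<^sup>+t. I s t x \<partial>lborel) \<partial>lborel) \<partial>M)"
    by (simp add: pt)
  also have "\<dots> = (\<integral>\<^sup>+s. (\<integral>\<^sup>+x. (\<integral>\<^sup>+t. I s t x \<partial>lborel) \<partial>M) \<partial>lborel)"
    by (rule pM.Fubini'[symmetric]) (use Im3 in simp)
  also have "\<dots> = (\<integral>\<^sup>+s. (\<integral>\<^sup>+t. (\<integral>\<^sup>+x. I s t x \<partial>M) \<partial>lborel) \<partial>lborel)"
    by (intro nn_integral_cong pM.Fubini'[symmetric]) (use Im2 in simp)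
  also have "\<dots> = (\<integral>\<^sup>+s. (\<integral>\<^sup>+t. emeasure M {x. (s, fst x) \<in> S1 \<and> (t, snd x) \<in> S2} \<partial>lborel) \<partial>lborel)"
  proof (intro nn_integral_cong)
    fix s t
    have ms: "{x. (s, fst x) \<in> S1 \<and> (t, snd x) \<in> S2} \<in> sets M" by (simp add: sm) measurable
    have "(\<integral>\<^sup>+x. I s t x \<partial>M) = (\<integral>\<^sup>+x. indicator {x. (s, fst x) \<in> S1 \<and> (t, snd x) \<in> S2} x \<partial>M)"
      unfolding I_def by (intro nn_integral_cong) (auto simp: indicator_def)
    also have "\<dots> = emeasure M {x. (s, fst x) \<in> S1 \<and> (t, snd x) \<in> S2}" using ms by simp
    finally show "(\<integral>\<^sup>+x. I s t x \<partial>M) = emeasure M {x. (s, fst x) \<in> S1 \<and> (t, snd x) \<in> S2}" .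
  qed
  finally show ?thesis .
qed

lemma parts:
  fixes M :: "r2 measure"
  assumes ps: "prob_space M" and sm: "sets M = sets borel"
  shows "measure M {x. s < fst x \<and> t < snd x} + measure M {x. s < fst x \<and> snd x \<le> t} = measure M {x. s < fst x}"
    "measure M {x. s < fst x \<and> t < snd x} + measure M {x. fst x \<le> s \<and> t < snd x} = measure M {x. t < snd x}"
    "measure M {x. s < fst x \<and> t < snd x} + measure M {x. s < fst x \<and> snd x \<le> t}
     + measure M {x. fst x \<le> s \<and> t < snd x} + measure M {x. fst x \<le> s \<and> snd x \<le> t} = 1"
proof -
  have fm: "finite_measure M" using ps by (simp add: prob_space_def)
  have sp: "space M = UNIV" using sets_eq_imp_space_eq[OF sm] by simp
  have ms: "{x. P (fst x) (snd x)} \<in> sets M" if "Measurable.pred borel (\<lambda>x::r2. P (fst x) (snd x))" for P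
    using that by (simp add: sm pred_def)
  have [simp]: "{x::r2. s < fst x \<and> t < snd x} \<in> sets M" "{x::r2. s < fst x \<and> snd x \<le> t} \<in> sets M"
    "{x::r2. fst x \<le> s \<and> t < snd x} \<in> sets M" "{x::r2. fst x \<le> s \<and> snd x \<le> t} \<in> sets M"
    "{x::r2. s < fst x} \<in> sets M" "{x::r2. fst x \<le> s} \<in> sets M" "{x::r2. t < snd x} \<in> sets M"
    by (simp_all add: sm) measurable
  have "measure M {x. s < fst x \<and> t < snd x} + measure M {x. s < fst x \<and> snd x \<le> t}
     = measure M ({x. s < fst x \<and> t < snd x} \<union> {x. s < fst x \<and> snd x \<le> t})"
    by (rule finite_measure.finite_measure_Union[symmetric, OF fm]) auto
  also have "{x::r2. s < fst x \<and> t < snd x} \<union> {x. s < fst x \<and> snd x \<le> t} = {x. s < fst x}" by auto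
  finally show 1: "measure M {x. s < fst x \<and> t < snd x} + measure M {x. s < fst x \<and> snd x \<le> t} = measure M {x. s < fst x}" .
  have "measure M {x. s < fst x \<and> t < snd x} + measure M {x. fst x \<le> s \<and> t < snd x}
     = measure M ({x. s < fst x \<and> t < snd x} \<union> {x. fst x \<le> s \<and> t < snd x})"
    by (rule finite_measure.finite_measure_Union[symmetric, OF fm]) auto
  also have "{x::r2. s < fst x \<and> t < snd x} \<union> {x. fst x \<le> s \<and> t < snd x} = {x. t < snd x}" by auto
  finally show "measure M {x. s < fst x \<and> t < snd x} + measure M {x. fst x \<le> s \<and> t < snd x} = measure M {x. t < snd x}" .
  have 2: "measure M {x. fst x \<le> s \<and> t < snd x} + measure M {x. fst x \<le> s \<and> snd x \<le> t} = measure M {x. fst x \<le> s}"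
  proof -
    have "measure M {x. fst x \<le> s \<and> t < snd x} + measure M {x. fst x \<le> s \<and> snd x \<le> t}
       = measure M ({x. fst x \<le> s \<and> t < snd x} \<union> {x. fst x \<le> s \<and> snd x \<le> t})"
      by (rule finite_measure.finite_measure_Union[symmetric, OF fm]) auto
    also have "{x::r2. fst x \<le> s \<and> t < snd x} \<union> {x. fst x \<le> s \<and> snd x \<le> t} = {x. fst x \<le> s}" by auto
    finally show ?thesis .
  qed
  have 3: "measure M {x. s < fst x} + measure M {x. fst x \<le> s} = 1"
  proof -
    have "measure M {x. s < fst x} + measure M {x. fst x \<le> s} = measure M ({x. s < fst x} \<union> {x. fst x \<le> s})"
      by (rule finite_measure.finite_measure_Union[symmetric, OF fm]) auto
    also have "{x::r2. s < fst x} \<union> {x. fst x \<le> s} = space M" by (auto simp: sp)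
    also have "measure M (space M) = 1" using prob_space.prob_space[OF ps] .
    finally show ?thesis .
  qed
  show "measure M {x. s < fst x \<and> t < snd x} + measure M {x. s < fst x \<and> snd x \<le> t}
     + measure M {x. fst x \<le> s \<and> t < snd x} + measure M {x. fst x \<le> s \<and> snd x \<le> t} = 1"
    using 1 2 3 by linarith
qed

lemma marg_eq:
  fixes M N :: "r2 measure"
  assumes sM: "sets M = sets borel" and sN: "sets N = sets borel"
    and d1: "distr N borel fst = distr M borel fst" and d2: "distr N borel snd = distr M borel snd"
  shows "measure N {x. s < fst x} = measure M {x. s < fst x}" "measure N {x. t < snd x} = measure M {x. t < snd x}"
proof -
  have spM: "space M = UNIV" using sets_eq_imp_space_eq[OF sM] by simp
  have spN: "space N = UNIV" using sets_eq_imp_space_eq[OF sN] by simp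
  have fM: "fst \<in> measurable M borel" "snd \<in> measurable M borel" unfolding measurable_cong_sets[OF sM refl] by simp_all
  have fN: "fst \<in> measurable N borel" "snd \<in> measurable N borel" unfolding measurable_cong_sets[OF sN refl] by simp_all
  have "measure N {x. s < fst x} = measure (distr N borel fst) {s<..}"
    using measure_distr[OF fN(1), of "{s<..}"] spN by (simp add: vimage_def)
  also have "\<dots> = measure M {x. s < fst x}"
    using measure_distr[OF fM(1), of "{s<..}"] spM d1 by (simp add: vimage_def)
  finally show "measure N {x. s < fst x} = measure M {x. s < fst x}" .
  have "measure N {x. t < snd x} = measure (distr N borel snd) {t<..}"
    using measure_distr[OF fN(2), of "{t<..}"] spN by (simp add: vimage_def)
  also have "\<dots> = measure M {x. t < snd x}"
    using measure_distr[OF fM(2), of "{t<..}"] spM d2 by (simp add: vimage_def)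
  finally show "measure N {x. t < snd x} = measure M {x. t < snd x}" .
qed

lemma quad:
  fixes \<mu> \<pi> :: "r2 measure"
  assumes p1: "prob_space \<mu>" and s1: "sets \<mu> = sets borel" and p2: "prob_space \<pi>" and s2: "sets \<pi> = sets borel"
    and d1: "distr \<pi> borel fst = distr \<mu> borel fst" and d2: "distr \<pi> borel snd = distr \<mu> borel snd"
    and comon: "measure \<mu> {x. s < fst x \<and> snd x \<le> t} = 0 \<or> measure \<mu> {x. fst x \<le> s \<and> t < snd x} = 0"
  shows "measure \<pi> {x. s < fst x \<and> t < snd x} \<le> measure \<mu> {x. s < fst x \<and> t < snd x}"
    "measure \<mu> {x. s < fst x \<and> snd x \<le> t} \<le> measure \<pi> {x. s < fst x \<and> snd x \<le> t}"
    "measure \<mu> {x. fst x \<le> s \<and> t < snd x} \<le> measure \<pi> {x. fst x \<le> s \<and> t < snd x}"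
    "measure \<pi> {x. fst x \<le> s \<and> snd x \<le> t} \<le> measure \<mu> {x. fst x \<le> s \<and> snd x \<le> t}"
  using parts[OF p1 s1, where s=s and t=t] parts[OF p2 s2, where s=s and t=t] marg_eq(1)[OF s1 s2 d1 d2, of s] marg_eq(2)[OF s1 s2 d1 d2, of t] comon
    measure_nonneg[of \<pi> "{x. s < fst x \<and> snd x \<le> t}"] measure_nonneg[of \<pi> "{x. fst x \<le> s \<and> t < snd x}"]
  by linarith+



definition Spos :: "(real \<times> real) set" where "Spos = {p. 0 \<le> fst p \<and> fst p < snd p}"
definition Sneg :: "(real \<times> real) set" where "Sneg = {p. 0 < fst p \<and> fst p \<le> - snd p}"

lemma Spos_m[measurable]: "Spos \<in> sets (borel \<Otimes>\<^sub>M borel)"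
  unfolding borel_prod Spos_def by measurable
lemma Sneg_m[measurable]: "Sneg \<in> sets (borel \<Otimes>\<^sub>M borel)"
  unfolding borel_prod Sneg_def by measurable

lemma e_pos: "ennreal (max 0 u) = emeasure lborel {s. (s, u) \<in> Spos}"
proof (cases "0 \<le> u")
  case True
  have "{s. (s, u) \<in> Spos} = {0..<u}" unfolding Spos_def by auto
  then show ?thesis using True by simp
next
  case False
  have "{s. (s, u) \<in> Spos} = {}" unfolding Spos_def using False by auto
  then show ?thesis using False by simp
qed

lemma e_neg: "ennreal (max 0 (- u)) = emeasure lborel {s. (s, u) \<in> Sneg}"
proof (cases "0 \<le> - u")
  case True
  have "{s. (s, u) \<in> Sneg} = {0<..-u}" unfolding Sneg_def by auto
  then show ?thesis using True by simp
next
  case False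
  have "{s. (s, u) \<in> Sneg} = {}" unfolding Sneg_def using False by auto
  then show ?thesis using False by simp
qed

lemma pm_bound: "\<bar>max 0 (a::real) * max 0 b\<bar> \<le> \<bar>a * b\<bar>"
proof -
  have h: "0 \<le> max 0 a" "max 0 a \<le> \<bar>a\<bar>" "0 \<le> max 0 b" "max 0 b \<le> \<bar>b\<bar>" by auto
  have "max 0 a * max 0 b \<le> \<bar>a\<bar> * \<bar>b\<bar>" using h by (intro mult_mono) auto
  then show ?thesis using h by (simp add: abs_mult)
qed

lemma rearr:
  fixes \<mu> \<pi> :: "r2 measure"
  assumes p1: "prob_space \<mu>" and s1: "sets \<mu> = sets borel" and p2: "prob_space \<pi>" and s2: "sets \<pi> = sets borel"
    and d1: "distr \<pi> borel fst = distr \<mu> borel fst" and d2: "distr \<pi> borel snd = distr \<mu> borel snd"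
    and comon: "\<And>s t. measure \<mu> {x. s < fst x \<and> snd x \<le> t} = 0 \<or> measure \<mu> {x. fst x \<le> s \<and> t < snd x} = 0"
    and i1: "integrable \<mu> (\<lambda>x. fst x * snd x)" and i2: "integrable \<pi> (\<lambda>x. fst x * snd x)"
  shows "(\<integral>x. fst x * snd x \<partial>\<pi>) \<le> (\<integral>x. fst x * snd x \<partial>\<mu>)"
proof -
  have fm1: "finite_measure \<mu>" using p1 by (simp add: prob_space_def)
  have fm2: "finite_measure \<pi>" using p2 by (simp add: prob_space_def)
  have sets1: "{x. P (fst x) (snd x)} \<in> sets \<mu>" "{x. P (fst x) (snd x)} \<in> sets \<pi>" if "Measurable.pred borel (\<lambda>x::r2. P (fst x) (snd x))" for P
    using that by (simp_all add: s1 s2 pred_def)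
  note q = quad[OF p1 s1 p2 s2 d1 d2 comon]
  have em: "emeasure M A = ennreal (measure M A)" if "finite_measure M" for M :: "r2 measure" and A
    using that finite_measure.emeasure_eq_measure by blast
  have c_pp: "emeasure \<pi> {x. (s, fst x) \<in> Spos \<and> (t, snd x) \<in> Spos} \<le> emeasure \<mu> {x. (s, fst x) \<in> Spos \<and> (t, snd x) \<in> Spos}" for s t
  proof (cases "0 \<le> s \<and> 0 \<le> t")
    case True
    then have e: "{x::r2. (s, fst x) \<in> Spos \<and> (t, snd x) \<in> Spos} = {x. s < fst x \<and> t < snd x}" unfolding Spos_def by auto
    show ?thesis unfolding e using q(1)[of s t] by (simp add: em[OF fm1] em[OF fm2])
  next
    case False
    then have e: "{x::r2. (s, fst x) \<in> Spos \<and> (t, snd x) \<in> Spos} = {}" unfolding Spos_def by auto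
    show ?thesis unfolding e by simp
  qed
  have c_nn: "emeasure \<pi> {x. (s, fst x) \<in> Sneg \<and> (t, snd x) \<in> Sneg} \<le> emeasure \<mu> {x. (s, fst x) \<in> Sneg \<and> (t, snd x) \<in> Sneg}" for s t
  proof (cases "0 < s \<and> 0 < t")
    case True
    then have e: "{x::r2. (s, fst x) \<in> Sneg \<and> (t, snd x) \<in> Sneg} = {x. fst x \<le> - s \<and> snd x \<le> - t}" unfolding Sneg_def by auto
    show ?thesis unfolding e using q(4)[of "-s" "-t"] by (simp add: em[OF fm1] em[OF fm2])
  next
    case False
    then have e: "{x::r2. (s, fst x) \<in> Sneg \<and> (t, snd x) \<in> Sneg} = {}" unfolding Sneg_def by auto
    show ?thesis unfolding e by simp
  qed
  have c_pn: "emeasure \<mu> {x. (s, fst x) \<in> Spos \<and> (t, snd x) \<in> Sneg} \<le> emeasure \<pi> {x. (s, fst x) \<in> Spos \<and> (t, snd x) \<in> Sneg}" for s t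
  proof (cases "0 \<le> s \<and> 0 < t")
    case True
    then have e: "{x::r2. (s, fst x) \<in> Spos \<and> (t, snd x) \<in> Sneg} = {x. s < fst x \<and> snd x \<le> - t}" unfolding Spos_def Sneg_def by auto
    show ?thesis unfolding e using q(2)[of s "-t"] by (simp add: em[OF fm1] em[OF fm2])
  next
    case False
    then have e: "{x::r2. (s, fst x) \<in> Spos \<and> (t, snd x) \<in> Sneg} = {}" unfolding Spos_def Sneg_def by auto
    show ?thesis unfolding e by simp
  qed
  have c_np: "emeasure \<mu> {x. (s, fst x) \<in> Sneg \<and> (t, snd x) \<in> Spos} \<le> emeasure \<pi> {x. (s, fst x) \<in> Sneg \<and> (t, snd x) \<in> Spos}" for s t
  proof (cases "0 < s \<and> 0 \<le> t")
    case True
    then have e: "{x::r2. (s, fst x) \<in> Sneg \<and> (t, snd x) \<in> Spos} = {x. fst x \<le> - s \<and> t < snd x}" unfolding Spos_def Sneg_def by auto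
    show ?thesis unfolding e using q(3)[of "-s" t] by (simp add: em[OF fm1] em[OF fm2])
  next
    case False
    then have e: "{x::r2. (s, fst x) \<in> Sneg \<and> (t, snd x) \<in> Spos} = {}" unfolding Spos_def Sneg_def by auto
    show ?thesis unfolding e by simp
  qed
  have Lpp: "(\<integral>\<^sup>+x. ennreal (max 0 (fst x) * max 0 (snd x)) \<partial>M) = (\<integral>\<^sup>+s. (\<integral>\<^sup>+t. emeasure M {x. (s, fst x) \<in> Spos \<and> (t, snd x) \<in> Spos} \<partial>lborel) \<partial>lborel)"
    if "prob_space M" "sets M = sets borel" for M :: "r2 measure"
    by (rule layer[OF that Spos_m Spos_m, of "\<lambda>u. max 0 u" "\<lambda>u. max 0 u"]) (rule e_pos e_neg | simp)+
  have Lnn: "(\<integral>\<^sup>+x. ennreal (max 0 (- fst x) * max 0 (- snd x)) \<partial>M) = (\<integral>\<^sup>+s. (\<integral>\<^sup>+t. emeasure M {x. (s, fst x) \<in> Sneg \<and> (t, snd x) \<in> Sneg} \<partial>lborel) \<partial>lborel)"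
    if "prob_space M" "sets M = sets borel" for M :: "r2 measure"
    by (rule layer[OF that Sneg_m Sneg_m, of "\<lambda>u. max 0 (- u)" "\<lambda>u. max 0 (- u)"]) (rule e_pos e_neg | simp)+
  have Lpn: "(\<integral>\<^sup>+x. ennreal (max 0 (fst x) * max 0 (- snd x)) \<partial>M) = (\<integral>\<^sup>+s. (\<integral>\<^sup>+t. emeasure M {x. (s, fst x) \<in> Spos \<and> (t, snd x) \<in> Sneg} \<partial>lborel) \<partial>lborel)"
    if "prob_space M" "sets M = sets borel" for M :: "r2 measure"
    by (rule layer[OF that Spos_m Sneg_m, of "\<lambda>u. max 0 u" "\<lambda>u. max 0 (- u)"]) (rule e_pos e_neg | simp)+
  have Lnp: "(\<integral>\<^sup>+x. ennreal (max 0 (- fst x) * max 0 (snd x)) \<partial>M) = (\<integral>\<^sup>+s. (\<integral>\<^sup>+t. emeasure M {x. (s, fst x) \<in> Sneg \<and> (t, snd x) \<in> Spos} \<partial>lborel) \<partial>lborel)"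
    if "prob_space M" "sets M = sets borel" for M :: "r2 measure"
    by (rule layer[OF that Sneg_m Spos_m, of "\<lambda>u. max 0 (- u)" "\<lambda>u. max 0 u"]) (rule e_pos e_neg | simp)+
  have N_pp: "(\<integral>\<^sup>+x. ennreal (max 0 (fst x) * max 0 (snd x)) \<partial>\<pi>) \<le> (\<integral>\<^sup>+x. ennreal (max 0 (fst x) * max 0 (snd x)) \<partial>\<mu>)"
    unfolding Lpp[OF p1 s1] Lpp[OF p2 s2] by (intro nn_integral_mono c_pp)
  have N_nn: "(\<integral>\<^sup>+x. ennreal (max 0 (- fst x) * max 0 (- snd x)) \<partial>\<pi>) \<le> (\<integral>\<^sup>+x. ennreal (max 0 (- fst x) * max 0 (- snd x)) \<partial>\<mu>)"
    unfolding Lnn[OF p1 s1] Lnn[OF p2 s2] by (intro nn_integral_mono c_nn)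
  have N_pn: "(\<integral>\<^sup>+x. ennreal (max 0 (fst x) * max 0 (- snd x)) \<partial>\<mu>) \<le> (\<integral>\<^sup>+x. ennreal (max 0 (fst x) * max 0 (- snd x)) \<partial>\<pi>)"
    unfolding Lpn[OF p1 s1] Lpn[OF p2 s2] by (intro nn_integral_mono c_pn)
  have N_np: "(\<integral>\<^sup>+x. ennreal (max 0 (- fst x) * max 0 (snd x)) \<partial>\<mu>) \<le> (\<integral>\<^sup>+x. ennreal (max 0 (- fst x) * max 0 (snd x)) \<partial>\<pi>)"
    unfolding Lnp[OF p1 s1] Lnp[OF p2 s2] by (intro nn_integral_mono c_np)
  have I: "integrable M (\<lambda>x. max 0 (f (fst x)) * max 0 (g (snd x)))" and
    E: "(\<integral>\<^sup>+x. ennreal (max 0 (f (fst x)) * max 0 (g (snd x))) \<partial>M) = ennreal (\<integral>x. max 0 (f (fst x)) * max 0 (g (snd x)) \<partial>M)"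
    if iM: "integrable M (\<lambda>x. fst x * snd x)" and sM: "sets M = sets borel"
      and fg: "(f = (\<lambda>u. u) \<or> f = uminus) \<and> (g = (\<lambda>u. u) \<or> g = uminus)" for M :: "r2 measure" and f g :: "real \<Rightarrow> real"
  proof -
    have mc: "measurable M N = measurable borel N" for N :: "'z measure"
      using sM by (rule measurable_cong_sets) auto
    have [measurable]: "f \<in> borel_measurable borel" "g \<in> borel_measurable borel" using fg by auto
    have ab: "\<bar>f a\<bar> = \<bar>a\<bar>" "\<bar>g a\<bar> = \<bar>a\<bar>" for a using fg by auto
    show Ii: "integrable M (\<lambda>x. max 0 (f (fst x)) * max 0 (g (snd x)))"
    proof (rule Bochner_Integration.integrable_bound[OF iM])
      show "(\<lambda>x. max 0 (f (fst x)) * max 0 (g (snd x))) \<in> borel_measurable M" by (simp add: mc) measurable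
      show "AE x in M. norm (max 0 (f (fst x)) * max 0 (g (snd x))) \<le> norm (fst x * snd x)"
      proof (intro AE_I2)
        fix x :: r2
        have "\<bar>max 0 (f (fst x)) * max 0 (g (snd x))\<bar> \<le> \<bar>f (fst x) * g (snd x)\<bar>" by (rule pm_bound)
        also have "\<dots> = \<bar>fst x * snd x\<bar>" by (simp add: abs_mult ab)
        finally show "norm (max 0 (f (fst x)) * max 0 (g (snd x))) \<le> norm (fst x * snd x)" by simp
      qed
    qed
    show "(\<integral>\<^sup>+x. ennreal (max 0 (f (fst x)) * max 0 (g (snd x))) \<partial>M) = ennreal (\<integral>x. max 0 (f (fst x)) * max 0 (g (snd x)) \<partial>M)"
      by (rule nn_integral_eq_integral[OF Ii]) auto
  qed
  have dec: "(\<integral>x. fst x * snd x \<partial>M) = (\<integral>x. max 0 (fst x) * max 0 (snd x) \<partial>M) + (\<integral>x. max 0 (- fst x) * max 0 (- snd x) \<partial>M)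
       - (\<integral>x. max 0 (fst x) * max 0 (- snd x) \<partial>M) - (\<integral>x. max 0 (- fst x) * max 0 (snd x) \<partial>M)"
    if iM: "integrable M (\<lambda>x. fst x * snd x)" and sM: "sets M = sets borel" for M :: "r2 measure"
  proof -
    have "(\<integral>x. fst x * snd x \<partial>M) = (\<integral>x. max 0 (fst x) * max 0 (snd x) + max 0 (- fst x) * max 0 (- snd x)
       - max 0 (fst x) * max 0 (- snd x) - max 0 (- fst x) * max 0 (snd x) \<partial>M)"
      by (rule Bochner_Integration.integral_cong) (auto simp: max_def)
    also have "\<dots> = (\<integral>x. max 0 (fst x) * max 0 (snd x) \<partial>M) + (\<integral>x. max 0 (- fst x) * max 0 (- snd x) \<partial>M)
       - (\<integral>x. max 0 (fst x) * max 0 (- snd x) \<partial>M) - (\<integral>x. max 0 (- fst x) * max 0 (snd x) \<partial>M)"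
      using I[OF iM sM, of "\<lambda>u. u" "\<lambda>u. u"] I[OF iM sM, of uminus uminus] I[OF iM sM, of "\<lambda>u. u" uminus] I[OF iM sM, of uminus "\<lambda>u. u"]
      by simp
    finally show ?thesis .
  qed
  have R: "(\<integral>x. max 0 (f (fst x)) * max 0 (g (snd x)) \<partial>\<pi>) \<le> (\<integral>x. max 0 (f (fst x)) * max 0 (g (snd x)) \<partial>\<mu>)"
    if fg: "(f = (\<lambda>u. u) \<or> f = uminus) \<and> (g = (\<lambda>u. u) \<or> g = uminus)"
      and N: "(\<integral>\<^sup>+x. ennreal (max 0 (f (fst x)) * max 0 (g (snd x))) \<partial>\<pi>) \<le> (\<integral>\<^sup>+x. ennreal (max 0 (f (fst x)) * max 0 (g (snd x))) \<partial>\<mu>)"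
    for f g :: "real \<Rightarrow> real"
  proof -
    have "0 \<le> (\<integral>x. max 0 (f (fst x)) * max 0 (g (snd x)) \<partial>\<mu>)" by (rule Bochner_Integration.integral_nonneg) auto
    then show ?thesis using N unfolding E[OF i1 s1 fg] E[OF i2 s2 fg] by simp
  qed
  have R': "(\<integral>x. max 0 (f (fst x)) * max 0 (g (snd x)) \<partial>\<mu>) \<le> (\<integral>x. max 0 (f (fst x)) * max 0 (g (snd x)) \<partial>\<pi>)"
    if fg: "(f = (\<lambda>u. u) \<or> f = uminus) \<and> (g = (\<lambda>u. u) \<or> g = uminus)"
      and N: "(\<integral>\<^sup>+x. ennreal (max 0 (f (fst x)) * max 0 (g (snd x))) \<partial>\<mu>) \<le> (\<integral>\<^sup>+x. ennreal (max 0 (f (fst x)) * max 0 (g (snd x))) \<partial>\<pi>)"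
    for f g :: "real \<Rightarrow> real"
  proof -
    have "0 \<le> (\<integral>x. max 0 (f (fst x)) * max 0 (g (snd x)) \<partial>\<pi>)" by (rule Bochner_Integration.integral_nonneg) auto
    then show ?thesis using N unfolding E[OF i1 s1 fg] E[OF i2 s2 fg] by simp
  qed
  have r1: "(\<integral>x. max 0 (fst x) * max 0 (snd x) \<partial>\<pi>) \<le> (\<integral>x. max 0 (fst x) * max 0 (snd x) \<partial>\<mu>)"
    using R[of "\<lambda>u. u" "\<lambda>u. u"] N_pp by simp
  have r2: "(\<integral>x. max 0 (- fst x) * max 0 (- snd x) \<partial>\<pi>) \<le> (\<integral>x. max 0 (- fst x) * max 0 (- snd x) \<partial>\<mu>)"
    using R[of uminus uminus] N_nn by simp
  have r3: "(\<integral>x. max 0 (fst x) * max 0 (- snd x) \<partial>\<mu>) \<le> (\<integral>x. max 0 (fst x) * max 0 (- snd x) \<partial>\<pi>)"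
    using R'[of "\<lambda>u. u" uminus] N_pn by simp
  have r4: "(\<integral>x. max 0 (- fst x) * max 0 (snd x) \<partial>\<mu>) \<le> (\<integral>x. max 0 (- fst x) * max 0 (snd x) \<partial>\<pi>)"
    using R'[of uminus "\<lambda>u. u"] N_np by simp
  show ?thesis unfolding dec[OF i1 s1] dec[OF i2 s2] using r1 r2 r3 r4 by linarith
qed



lemma abs_prod_le_sq: "\<bar>(a::real) * b\<bar> \<le> a^2 + b^2"
proof -
  have "0 \<le> (\<bar>a\<bar> - \<bar>b\<bar>)^2" by simp
  then have "2 * (\<bar>a\<bar> * \<bar>b\<bar>) \<le> a^2 + b^2" by (simp add: power2_eq_square algebra_simps)
  moreover have "0 \<le> \<bar>a\<bar> * \<bar>b\<bar>" by simp
  ultimately show ?thesis unfolding abs_mult by linarith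
qed

theorem corollary1:
  fixes \<nu> :: "r2 measure" and \<gamma> :: "(r2 \<times> r2) measure"
  assumes "\<nu> \<in> P2"
    and "\<gamma> \<in> Gamma \<nu>"
    and "\<forall>g \<in> Gamma \<nu>. (\<integral>p. cost (fst p) (snd p) \<partial>\<gamma>) \<le> (\<integral>p. cost (fst p) (snd p) \<partial>g)"
  defines "\<mu> \<equiv> distr \<gamma> borel fst"
  defines "\<mu>1 \<equiv> distr \<mu> borel fst"
  defines "\<mu>2 \<equiv> distr \<mu> borel snd"
  shows "\<mu> \<in> couplings \<mu>1 \<mu>2
      \<and> (\<forall>\<pi> \<in> couplings \<mu>1 \<mu>2. (\<integral>x. fst x * snd x \<partial>\<pi>) \<le> (\<integral>x. fst x * snd x \<partial>\<mu>))
      \<and> W2 \<mu>1 \<mu>2 = sqrt (\<integral>x. (fst x - snd x)^2 \<partial>\<mu>)"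
proof -
  note g = assms(2) and opt = assms(3)
  note gb = Gamma_basic[OF g]
  have ps: "prob_space \<gamma>" and sg: "sets \<gamma> = sets borel" and sq: "integrable \<gamma> (\<lambda>z. norm z ^ 2)" using gb by auto
  have fmg: "finite_measure \<gamma>" using ps by (simp add: prob_space_def)
  have mcg: "measurable \<gamma> N = measurable borel N" for N :: "'z measure"
    using sg by (rule measurable_cong_sets) auto
  have fstm: "fst \<in> measurable \<gamma> borel" by (simp add: mcg)
  have pmu: "prob_space \<mu>" unfolding \<mu>_def by (rule prob_space.prob_space_distr[OF ps fstm])
  have smu: "sets \<mu> = sets borel" unfolding \<mu>_def by simp
  have spmu: "space \<mu> = UNIV" using sets_eq_imp_space_eq[OF smu] by simp
  have part1: "\<mu> \<in> couplings \<mu>1 \<mu>2" unfolding couplings_def \<mu>1_def \<mu>2_def using pmu smu by auto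
  have cov: "(\<integral>x. indicator E x * fst x \<partial>\<mu>) * (\<integral>x. indicator E x * snd x \<partial>\<mu>) \<le> measure \<mu> E * (\<integral>x. indicator E x * (fst x * snd x) \<partial>\<mu>)"
    if E: "E \<in> sets borel" and pos: "0 < measure \<mu> E" for E
  proof -
    have ie: "(\<integral>x. indicator E x \<partial>\<mu>) = measure \<mu> E" by (simp add: spmu)
    have "0 < (\<integral>x. indicator E x \<partial>distr \<gamma> borel fst :: real)" using pos ie unfolding \<mu>_def by simp
    from cov_mu[OF g opt E this] show ?thesis using ie unfolding \<mu>_def by simp
  qed
  have comon: "measure \<mu> {x. s < fst x \<and> snd x \<le> t} = 0 \<or> measure \<mu> {x. fst x \<le> s \<and> t < snd x} = 0" for s t
    by (rule comonotone[OF pmu smu cov])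
  have cp: "\<bar>fst (fst p)\<bar> \<le> norm p + 0" "\<bar>snd (fst p)\<bar> \<le> norm p + 0" for p :: "r2 \<times> r2"
    using comp_bounds[of p] by auto
  have imu: "integrable \<mu> (\<lambda>x. fst x * snd x)" unfolding \<mu>_def
    by (subst integrable_distr_eq[OF fstm]) (measurable, rule int_prod[OF fmg sq _ _ cp(1) cp(2)], auto simp: mcg)
  have imu1: "integrable \<mu> (\<lambda>x. (fst x)^2)" unfolding \<mu>_def
    by (subst integrable_distr_eq[OF fstm]) (measurable, unfold power2_eq_square, rule int_prod[OF fmg sq _ _ cp(1) cp(1)], auto simp: mcg)
  have imu2: "integrable \<mu> (\<lambda>x. (snd x)^2)" unfolding \<mu>_def
    by (subst integrable_distr_eq[OF fstm]) (measurable, unfold power2_eq_square, rule int_prod[OF fmg sq _ _ cp(2) cp(2)], auto simp: mcg)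
  have cpl: "prob_space \<pi> \<and> sets \<pi> = sets borel \<and> distr \<pi> borel fst = distr \<mu> borel fst \<and> distr \<pi> borel snd = distr \<mu> borel snd"
    if "\<pi> \<in> couplings \<mu>1 \<mu>2" for \<pi> using that unfolding couplings_def \<mu>1_def \<mu>2_def by auto
  have facts: "integrable \<pi> (\<lambda>x. fst x * snd x) \<and> integrable \<pi> (\<lambda>x. (fst x)^2) \<and> integrable \<pi> (\<lambda>x. (snd x)^2)
     \<and> (\<integral>x. (fst x)^2 \<partial>\<pi>) = (\<integral>x. (fst x)^2 \<partial>\<mu>) \<and> (\<integral>x. (snd x)^2 \<partial>\<pi>) = (\<integral>x. (snd x)^2 \<partial>\<mu>)"
    if "\<pi> \<in> couplings \<mu>1 \<mu>2" for \<pi>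
  proof -
    have pp: "prob_space \<pi>" and sp: "sets \<pi> = sets borel" and d1: "distr \<pi> borel fst = distr \<mu> borel fst"
      and d2: "distr \<pi> borel snd = distr \<mu> borel snd" using cpl[OF that] by auto
    have mp: "measurable \<pi> N = measurable borel N" for N :: "'z measure"
      using sp by (rule measurable_cong_sets) auto
    have mm: "measurable \<mu> N = measurable borel N" for N :: "'z measure"
      using smu by (rule measurable_cong_sets) auto
    have fp: "fst \<in> measurable \<pi> borel" "snd \<in> measurable \<pi> borel" by (simp_all add: mp)
    have fmu: "fst \<in> measurable \<mu> borel" "snd \<in> measurable \<mu> borel" by (simp_all add: mm)
    have sqm: "(\<lambda>u::real. u^2) \<in> borel_measurable borel" by measurable
    have a1: "integrable \<pi> (\<lambda>x. (fst x)^2)"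
      using integrable_distr_eq[OF fp(1) sqm] integrable_distr_eq[OF fmu(1) sqm] d1 imu1 by simp
    have a2: "integrable \<pi> (\<lambda>x. (snd x)^2)"
      using integrable_distr_eq[OF fp(2) sqm] integrable_distr_eq[OF fmu(2) sqm] d2 imu2 by simp
    have a3: "integrable \<pi> (\<lambda>x. fst x * snd x)"
    proof (rule Bochner_Integration.integrable_bound[where f = "\<lambda>x. (fst x)^2 + (snd x)^2"])
      show "integrable \<pi> (\<lambda>x. (fst x)^2 + (snd x)^2)" using a1 a2 by simp
      show "(\<lambda>x. fst x * snd x) \<in> borel_measurable \<pi>" by (simp add: mp)
      show "AE x in \<pi>. norm (fst x * snd x) \<le> norm ((fst x)^2 + (snd x)^2)"
      proof (intro AE_I2)
        fix x :: r2
        have "\<bar>fst x * snd x\<bar> \<le> (fst x)^2 + (snd x)^2" by (rule abs_prod_le_sq)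
        moreover have "0 \<le> (fst x)^2 + (snd x)^2" by simp
        ultimately show "norm (fst x * snd x) \<le> norm ((fst x)^2 + (snd x)^2)" by simp
      qed
    qed
    have b1: "(\<integral>x. (fst x)^2 \<partial>\<pi>) = (\<integral>x. (fst x)^2 \<partial>\<mu>)"
      using integral_distr[OF fp(1) sqm] integral_distr[OF fmu(1) sqm] d1 by simp
    have b2: "(\<integral>x. (snd x)^2 \<partial>\<pi>) = (\<integral>x. (snd x)^2 \<partial>\<mu>)"
      using integral_distr[OF fp(2) sqm] integral_distr[OF fmu(2) sqm] d2 by simp
    show ?thesis using a1 a2 a3 b1 b2 by auto
  qed
  have part2: "\<forall>\<pi> \<in> couplings \<mu>1 \<mu>2. (\<integral>x. fst x * snd x \<partial>\<pi>) \<le> (\<integral>x. fst x * snd x \<partial>\<mu>)"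
  proof
    fix \<pi> assume h: "\<pi> \<in> couplings \<mu>1 \<mu>2"
    show "(\<integral>x. fst x * snd x \<partial>\<pi>) \<le> (\<integral>x. fst x * snd x \<partial>\<mu>)"
      using rearr[OF pmu smu _ _ _ _ comon imu] cpl[OF h] facts[OF h] by blast
  qed
  have sqexp: "(\<integral>x. (fst x - snd x)^2 \<partial>\<pi>) = (\<integral>x. (fst x)^2 \<partial>\<pi>) + (\<integral>x. (snd x)^2 \<partial>\<pi>) - 2 * (\<integral>x. fst x * snd x \<partial>\<pi>)"
    if "integrable \<pi> (\<lambda>x. fst x * snd x)" "integrable \<pi> (\<lambda>x. (fst x)^2)" "integrable \<pi> (\<lambda>x. (snd x)^2)" for \<pi> :: "r2 measure"
  proof -
    have "(\<integral>x. (fst x - snd x)^2 \<partial>\<pi>) = (\<integral>x. (fst x)^2 + (snd x)^2 - 2 * (fst x * snd x) \<partial>\<pi>)"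
      by (rule Bochner_Integration.integral_cong) (auto simp: power2_eq_square algebra_simps)
    also have "\<dots> = (\<integral>x. (fst x)^2 \<partial>\<pi>) + (\<integral>x. (snd x)^2 \<partial>\<pi>) - 2 * (\<integral>x. fst x * snd x \<partial>\<pi>)"
      using that by simp
    finally show ?thesis .
  qed
  have minimal: "(\<integral>x. (fst x - snd x)^2 \<partial>\<mu>) \<le> (\<integral>x. (fst x - snd x)^2 \<partial>\<pi>)" if h: "\<pi> \<in> couplings \<mu>1 \<mu>2" for \<pi>
  proof -
    have "(\<integral>x. fst x * snd x \<partial>\<pi>) \<le> (\<integral>x. fst x * snd x \<partial>\<mu>)" using part2 h by blast
    then show ?thesis using sqexp[of \<pi>] sqexp[of \<mu>] facts[OF h] imu imu1 imu2 by simp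
  qed
  have "(INF p \<in> couplings \<mu>1 \<mu>2. \<integral>st. (fst st - snd st)^2 \<partial>p) = (\<integral>x. (fst x - snd x)^2 \<partial>\<mu>)"
    by (rule cInf_eq_minimum) (use part1 minimal in auto)
  then have part3: "W2 \<mu>1 \<mu>2 = sqrt (\<integral>x. (fst x - snd x)^2 \<partial>\<mu>)" unfolding W2_def by simp
  show ?thesis using part1 part2 part3 by blast
qed


end
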